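(* The (multi-valued) Kasner map realizes chaos for all $v\in (0,1/2)$.
   Context: Fix a parameter $v\in(0,1/2)$. Let $\mathrm{K}^{\circ}$ denote the Kasner circle $\{(\Sigma_+,\Sigma_-)\,:\,\Sigma_+^2+\Sigma_-^2=1\}$, parametrized by the angle $\varphi$ via $(\Sigma_+,\Sigma_-)=(\cos\varphi,\sin\varphi)$. Let $A_1:=\{\Sigma_+\ge v\}\cap \mathrm{K}^{\circ}$, i.e. $\varphi\in[-\arccos v,\arccos v]$, and let $A_2,A_3$ be its images under rotation by $\pm 2\pi/3$ (namely $A_2=\{-(\Sigma_++\sqrt3\Sigma_-)/2\ge v\}$, $A_3=\{-(\Sigma_+-\sqrt3\Sigma_-)/2\ge v\}$). On $A_1$ define $\mathcal{K}_1(\varphi):=\pi-2\arctan\big(\tfrac{1+v}{1-v}\tan(\varphi/2)\big)$ (the map sending the $\alpha$-limit to the $\omega$-limit of Bianchi type II heteroclinic orbits with $N_1\neq0$), and let $\mathcal{K}_2,\mathcal{K}_3$ on $A_2,A_3$ be the maps obtained from $\mathcal{K}_1$ by the same rotations. Set $\mathbf{A}:=(A_1\cap A_2)\cup(A_2\cap A_3)\cup(A_1\cap A_3)$; for $v<1/2$ these overlaps have positive length. For $\mu\in\{1,2\},\nu\in\{2,3\},\zeta\in\{1,3\}$ define $\mathcal{K}_{\mu\nu\zeta}:\mathrm{K}^{\circ}\to\mathrm{K}^{\circ}$ by $\mathcal{K}_{\mu\nu\zeta}(p)=\mathcal{K}_\alpha(p)$ if $p\in A_\alpha\setminus\mathbf{A}$,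 $=\mathcal{K}_\mu(p)$ if $p\in A_1\cap A_2$, $=\mathcal{K}_\nu(p)$ if $p\in A_2\cap A_3$, $=\mathcal{K}_\zeta(p)$ if $p\in A_1\cap A_3$. Let $\Sigma$ be the space of sequences $\omega=(\mu_n,\nu_n,\zeta_n)_{n\ge1}$ with $\mu_n\in\{1,2\},\nu_n\in\{2,3\},\zeta_n\in\{1,3\}$, and for $\omega=(\omega_n)$ set $\mathcal{K}^n_\omega:=\mathcal{K}_{\omega_n}\circ\cdots\circ\mathcal{K}_{\omega_1}$, $\mathcal{K}^0_\omega=\mathrm{Id}$. The (multi-valued) Kasner map is the skew product $(\omega,p)\mapsto(\sigma(\omega),\mathcal{K}_{\omega_1}(p))$ with $\sigma$ the shift. It realizes chaos if: (i) (sensitivity) there is $\delta>0$ such that for every $p\in\mathrm{K}^{\circ}$ and every neighborhood $U$ of $p$ there are $q\in U\setminus\{p\}$, $n\in\mathbb{N}_0$, $\omega,\omega^*\in\Sigma$ with $d(\mathcal{K}^n_\omega(p),\mathcal{K}^n_{\omega^*}(q))\ge\delta$; (ii) (topological transitivity) for any open $U,V\subset\mathrm{K}^{\circ}$ there are $n\in\mathbb{N}$, $\omega\in\Sigma$ with $\mathcal{K}^n_\omega(U)\cap V\neq\emptyset$; (iii) (dense periodic orbits) for every $p\in\mathrm{K}^{\circ}$ and every neighborhood $U$ of $p$ there are $\omega\in\Sigma$, $q\in U$, $n\in\mathbb{N}$ with $\mathcal{K}^n_\omega(q)=q$. *)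

theory Defs
  imports "HOL-Analysis.Analysis"
begin

text \<open>Points (Sigma_+, Sigma_-) of the plane are encoded as complex numbers
  Sigma_+ + i Sigma_-. The Kasner circle is the unit circle; the angle phi of a
  point z is Arg z.\<close>

definition kasner_circle :: "complex set" where
  "kasner_circle = {z. cmod z = 1}"

definition arcA :: "real \<Rightarrow> nat \<Rightarrow> complex set" where
  "arcA v a = {z \<in> kasner_circle.
     (if a = 1 then Re z \<ge> v
      else if a = 2 then - (Re z + sqrt 3 * Im z) / 2 \<ge> v
      else - (Re z - sqrt 3 * Im z) / 2 \<ge> v)}"

definition K1 :: "real \<Rightarrow> complex \<Rightarrow> complex" where
  "K1 v z = cis (pi - 2 * arctan ((1 + v) / (1 - v) * tan (Arg z / 2)))"

text \<open>Rotation carrying A_1 onto A_a: A_2 = rot(-2pi/3) A_1, A_3 = rot(2pi/3) A_1.\<close>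
definition rotA :: "nat \<Rightarrow> complex" where
  "rotA a = (if a = 1 then 1 else if a = 2 then cis (- 2 * pi / 3) else cis (2 * pi / 3))"

definition Kalpha :: "real \<Rightarrow> nat \<Rightarrow> complex \<Rightarrow> complex" where
  "Kalpha v a z = rotA a * K1 v (z / rotA a)"

definition overlapA :: "real \<Rightarrow> complex set" where
  "overlapA v = (arcA v 1 \<inter> arcA v 2) \<union> (arcA v 2 \<inter> arcA v 3) \<union> (arcA v 1 \<inter> arcA v 3)"

definition Ksym :: "real \<Rightarrow> nat \<times> nat \<times> nat \<Rightarrow> complex \<Rightarrow> complex" where
  "Ksym v s p = (case s of (mu, nu, zeta) \<Rightarrow>
     if p \<in> arcA v 1 \<inter> arcA v 2 then Kalpha v mu p
     else if p \<in> arcA v 2 \<inter> arcA v 3 then Kalpha v nu p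
     else if p \<in> arcA v 1 \<inter> arcA v 3 then Kalpha v zeta p
     else if p \<in> arcA v 1 then Kalpha v 1 p
     else if p \<in> arcA v 2 then Kalpha v 2 p
     else Kalpha v 3 p)"

text \<open>Admissible symbol sequences (omega_1, omega_2, ...) stored as omega 0, omega 1, ...\<close>
definition valid_seq :: "(nat \<Rightarrow> nat \<times> nat \<times> nat) \<Rightarrow> bool" where
  "valid_seq \<omega> \<longleftrightarrow> (\<forall>n. case \<omega> n of (mu, nu, zeta) \<Rightarrow>
      mu \<in> {1, 2} \<and> nu \<in> {2, 3} \<and> zeta \<in> {1, 3})"

fun Kiter :: "real \<Rightarrow> (nat \<Rightarrow> nat \<times> nat \<times> nat) \<Rightarrow> nat \<Rightarrow> complex \<Rightarrow> complex" where
  "Kiter v \<omega> 0 p = p"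
| "Kiter v \<omega> (Suc n) p = Ksym v (\<omega> n) (Kiter v \<omega> n p)"

definition sensitive :: "real \<Rightarrow> bool" where
  "sensitive v \<longleftrightarrow> (\<exists>\<delta>>0. \<forall>p \<in> kasner_circle. \<forall>U. openin (top_of_set kasner_circle) U \<and> p \<in> U \<longrightarrow>
      (\<exists>q \<in> U - {p}. \<exists>n \<omega> \<omega>'. valid_seq \<omega> \<and> valid_seq \<omega>' \<and>
         dist (Kiter v \<omega> n p) (Kiter v \<omega>' n q) \<ge> \<delta>))"

definition top_transitive :: "real \<Rightarrow> bool" where
  "top_transitive v \<longleftrightarrow> (\<forall>U V. openin (top_of_set kasner_circle) U \<and> U \<noteq> {} \<and>
      openin (top_of_set kasner_circle) V \<and> V \<noteq> {} \<longrightarrow>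
      (\<exists>n \<ge> 1. \<exists>\<omega>. valid_seq \<omega> \<and> Kiter v \<omega> n ` U \<inter> V \<noteq> {}))"

definition dense_periodic :: "real \<Rightarrow> bool" where
  "dense_periodic v \<longleftrightarrow> (\<forall>p \<in> kasner_circle. \<forall>U. openin (top_of_set kasner_circle) U \<and> p \<in> U \<longrightarrow>
      (\<exists>\<omega> q n. valid_seq \<omega> \<and> q \<in> U \<and> n \<ge> 1 \<and> Kiter v \<omega> n q = q))"

definition realizes_chaos :: "real \<Rightarrow> bool" where
  "realizes_chaos v \<longleftrightarrow> sensitive v \<and> top_transitive v \<and> dense_periodic v"

end

theory Submission
  imports Defs
begin

locale kas =
  fixes v :: real
  assumes v0: "0 < v" and v1: "v < 1/2"
begin

definition "cc = (1+v)/(1-v)"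
definition "al = arccos v"
definition "w = al - pi/3"
definition "al1 = al - w/2"
definition g :: "real \<Rightarrow> real" where "g u = pi - 2 * arctan (cc * tan (u/2))"
definition ctr :: "int \<Rightarrow> real" where "ctr j = 2 * pi * of_int j / 3"
definition gl :: "int \<Rightarrow> real \<Rightarrow> real" where "gl j x = ctr j + g (x - ctr j)"

lemma cc_gt1: "cc > 1" unfolding cc_def using v0 v1 by (simp add: field_simps)

lemma al_bounds: "pi/3 < al" "al < pi/2"
proof -
  have "arccos (1/2) < arccos v" by (rule arccos_less_arccos) (use v0 v1 in auto)
  thus "pi/3 < al" unfolding al_def by simp
  have "arccos v < arccos 0" by (rule arccos_less_arccos) (use v0 v1 in auto)
  thus "al < pi/2" unfolding al_def by simp
qed

lemma w_pos: "0 < w" and w_small: "w < pi/6" using al_bounds unfolding w_def by auto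

lemma cos_al: "cos al = v" unfolding al_def using v0 v1 by simp
lemma sin_al: "sin al = sqrt (1 - v^2)" unfolding al_def using v0 v1 by (simp add: sin_arccos)

lemma tan_half_al_sq: "(tan (al/2))^2 = 1/cc"
proof -
  have "tan (al/2) = sin al / (cos al + 1)" using tan_half[of "al/2"] by simp
  moreover have "v^2 \<le> 1" using v0 v1 by (intro power_le_one) auto
  ultimately have "(tan (al/2))^2 = (1 - v^2) / (v+1)^2" using v0 v1 by (simp add: cos_al sin_al power_divide)
  also have "\<dots> = ((1-v)*(1+v)) / ((1+v)*(1+v))" by (simp add: algebra_simps power2_eq_square)
  also have "\<dots> = (1-v)/(1+v)" using v0 by simp
  also have "\<dots> = 1/cc" unfolding cc_def by simp
  finally show ?thesis .
qed

definition "t0 = tan (al/2)"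
definition "t1 = tan (al1/2)"
definition "lam = cc*(1+t1^2)/(1+cc^2*t1^2)"

lemma al1_bounds: "pi/3 < al1 \<and> al1 < al" unfolding al1_def using w_pos al_bounds unfolding w_def by (auto simp: field_simps)
lemmas al1_bounds' = al1_bounds[THEN conjunct1] al1_bounds[THEN conjunct2]

lemma t0_pos: "0 < t0" unfolding t0_def using al_bounds by (intro tan_gt_zero) auto
lemma t1_pos: "0 < t1" unfolding t1_def using al_bounds al1_bounds' by (intro tan_gt_zero) auto
lemma t1_lt_t0: "t1 < t0" unfolding t0_def t1_def using al_bounds al1_bounds' by (intro tan_monotone) auto
lemma t0_sq: "t0^2 = 1/cc" using tan_half_al_sq unfolding t0_def .

lemma lam_gt1: "lam > 1"
proof -
  have "t1^2 < t0^2" using t1_pos t1_lt_t0 by (simp add: power_strict_mono)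
  hence "cc * t1^2 < 1" using t0_sq cc_gt1 by (simp add: field_simps)
  hence "(cc - 1) * (1 - cc*t1^2) > 0" using cc_gt1 by simp
  hence "cc*(1+t1^2) > 1 + cc^2*t1^2" by (simp add: algebra_simps power2_eq_square)
  moreover have "1 + cc^2*t1^2 > 0" by (simp add: add_pos_nonneg)
  ultimately show ?thesis unfolding lam_def by (subst less_divide_eq_1_pos) auto
qed

lemma frac_le_helper: "(0::real) < b \<Longrightarrow> 0 < d \<Longrightarrow> a*d \<le> c*b \<Longrightarrow> a/b \<le> c/d"
  by (simp add: divide_le_eq le_divide_eq mult.commute mult.left_commute)

lemma isCont_g: assumes "\<bar>u\<bar> < pi" shows "isCont g u"
proof -
  have "-(pi/2) < u/2" "u/2 < pi/2" using assms by auto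
  hence "cos (u/2) \<noteq> 0" using cos_gt_zero_pi[of "u/2"] by auto
  thus ?thesis unfolding g_def[abs_def] by (intro continuous_intros) auto
qed

lemma arctan_growth:
  fixes a b mu :: real
  assumes "a \<le> b" "\<And>x. a \<le> x \<Longrightarrow> x \<le> b \<Longrightarrow> mu/(1+x^2) \<le> cc/(1+(cc*x)^2)"
  shows "mu*(arctan b - arctan a) \<le> arctan (cc*b) - arctan (cc*a)"
proof -
  define f where "f x = arctan (cc*x) - mu * arctan x" for x
  have "f a \<le> f b"
  proof (rule DERIV_nonneg_imp_increasing_open[OF assms(1)])
    fix x assume x: "a < x" "x < b"
    have "DERIV f x :> inverse (1 + (cc*x)^2) * cc - mu * inverse (1 + x^2)"
      unfolding f_def[abs_def]
      by (auto intro!: derivative_eq_intros DERIV_arctan)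
    moreover have "inverse (1 + (cc*x)^2) * cc - mu * inverse (1 + x^2) \<ge> 0"
      using assms(2)[of x] x by (simp add: field_simps)
    ultimately show "\<exists>y. DERIV f x :> y \<and> y \<ge> 0" by blast
  next
    show "continuous_on {a..b} f" unfolding f_def[abs_def] by (intro continuous_intros)
  qed
  thus ?thesis unfolding f_def by (simp add: algebra_simps)
qed

lemma tan_half_mono: assumes "-al \<le> s" "s \<le> t" "t \<le> al" shows "tan (s/2) \<le> tan (t/2)"
proof (cases "s = t")
  case False thus ?thesis using assms al_bounds by (intro less_imp_le[OF tan_monotone]) auto
qed simp

lemma tan_half_bound: assumes "\<bar>u\<bar> \<le> al" shows "\<bar>tan (u/2)\<bar> \<le> t0"
proof -
  have "tan (u/2) \<le> t0" unfolding t0_def using tan_half_mono[of u al] assms by auto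
  moreover have "-t0 \<le> tan (u/2)" unfolding t0_def using tan_half_mono[of "-al" u] assms by auto
  ultimately show ?thesis by auto
qed

lemma g_growth:
  assumes "-al \<le> s" "s \<le> t" "t \<le> al"
    and "\<And>x. tan (s/2) \<le> x \<Longrightarrow> x \<le> tan (t/2) \<Longrightarrow> mu/(1+x^2) \<le> cc/(1+(cc*x)^2)"
  shows "mu*(t - s) \<le> g s - g t"
proof -
  have "mu*(arctan (tan (t/2)) - arctan (tan (s/2))) \<le> arctan (cc*tan (t/2)) - arctan (cc*tan (s/2))"
    by (rule arctan_growth) (use tan_half_mono[OF assms(1-3)] assms(4) in auto)
  moreover have "arctan (tan (t/2)) = t/2" "arctan (tan (s/2)) = s/2"
    using assms(1-3) al_bounds by (intro arctan_tan; linarith)+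
  ultimately show ?thesis unfolding g_def by (simp add: algebra_simps)
qed

lemma g_noncontr: assumes "-al \<le> s" "s \<le> t" "t \<le> al" shows "t - s \<le> g s - g t"
proof -
  have "1*(t - s) \<le> g s - g t"
  proof (rule g_growth[OF assms])
    fix x assume x: "tan (s/2) \<le> x" "x \<le> tan (t/2)"
    have "\<bar>s\<bar> \<le> al" "\<bar>t\<bar> \<le> al" using assms by auto
    hence "-t0 \<le> tan (s/2)" "tan (t/2) \<le> t0" using tan_half_bound[of s] tan_half_bound[of t] by auto
    hence "\<bar>x\<bar> \<le> t0" using x by (simp add: abs_le_iff)
    hence "\<bar>x\<bar> \<le> \<bar>t0\<bar>" using t0_pos by simp
    hence "x^2 \<le> t0^2" by (simp add: abs_le_square_iff)
    hence "cc*x^2 \<le> 1" using t0_sq cc_gt1 by (simp add: field_simps)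
    hence "(cc-1)*(1 - cc*x^2) \<ge> 0" using cc_gt1 by simp
    hence "1 + (cc*x)^2 \<le> cc*(1+x^2)" by (simp add: algebra_simps power2_eq_square)
    thus "1/(1+x^2) \<le> cc/(1+(cc*x)^2)" by (intro frac_le_helper) (auto simp: add_pos_nonneg algebra_simps)
  qed
  thus ?thesis by simp
qed

lemma g_expand: assumes "-al1 \<le> s" "s \<le> t" "t \<le> al1" shows "lam*(t - s) \<le> g s - g t"
proof (rule g_growth)
  show "-al \<le> s" "t \<le> al" using assms al1_bounds' by auto
  show "s \<le> t" by fact
  fix x assume x: "tan (s/2) \<le> x" "x \<le> tan (t/2)"
  have "tan (t/2) \<le> t1" unfolding t1_def using assms al1_bounds' al_bounds
    by (intro tan_half_mono) auto
  moreover have "-t1 \<le> tan (s/2)" unfolding t1_def using assms al1_bounds' al_bounds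
    tan_half_mono[of "-al1" s] by auto
  ultimately have "\<bar>x\<bar> \<le> \<bar>t1\<bar>" using x t1_pos by (simp add: abs_le_iff)
  hence "x^2 \<le> t1^2" by (simp add: abs_le_square_iff)
  hence A: "(cc^2 - 1)*(x^2 - t1^2) \<le> 0" using cc_gt1 by (simp add: mult_nonneg_nonpos)
  have "lam*(1 + (cc*x)^2) \<le> cc*(1+x^2)"
  proof -
    have "cc*(1+t1^2)*(1 + (cc*x)^2) \<le> cc*(1+x^2)*(1+cc^2*t1^2)"
    proof -
      have "cc*(1+x^2)*(1+cc^2*t1^2) - cc*(1+t1^2)*(1 + (cc*x)^2) = - cc*((cc^2 - 1)*(x^2 - t1^2))"
        by (simp add: algebra_simps power2_eq_square)
      moreover have "cc*((cc^2 - 1)*(x^2 - t1^2)) \<le> 0" using A cc_gt1 by (simp add: mult_nonneg_nonpos)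
      ultimately show ?thesis by linarith
    qed
    moreover have "lam*(1 + (cc*x)^2) = cc*(1+t1^2)*(1 + (cc*x)^2) / (1+cc^2*t1^2)" unfolding lam_def by simp
    moreover have "1+cc^2*t1^2 > 0" by (simp add: add_pos_nonneg)
    ultimately show ?thesis by (simp add: pos_divide_le_eq)
  qed
  thus "lam/(1+x^2) \<le> cc/(1+(cc*x)^2)" by (intro frac_le_helper) (auto simp: add_pos_nonneg algebra_simps)
qed

lemma g_al: "g al = al" and g_mal: "g (-al) = 2*pi - al"
proof -
  have "cc * t0 = 1/t0" using t0_sq t0_pos cc_gt1 by (simp add: field_simps power2_eq_square)
  moreover have "arctan (inverse t0) = pi/2 - arctan t0" by (rule arctan_inverse) (use t0_pos in auto)
  ultimately have "arctan (cc*t0) = pi/2 - arctan t0" using t0_pos by (simp add: inverse_eq_divide)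
  moreover have "arctan t0 = al/2" unfolding t0_def using al_bounds by (intro arctan_tan) auto
  ultimately have *: "arctan (cc*t0) = pi/2 - al/2" by simp
  show "g al = al" unfolding g_def t0_def[symmetric] using * by simp
  show "g (-al) = 2*pi - al" unfolding g_def using * by (simp add: t0_def arctan_minus)
qed

definition idx :: "int \<Rightarrow> nat" where
  "idx j = (if j mod 3 = 0 then 1 else if j mod 3 = 1 then 3 else 2)"
definition symj :: "int \<Rightarrow> nat \<times> nat \<times> nat" where
  "symj j = (if j mod 3 = 0 then (1,2,1) else if j mod 3 = 1 then (1,3,3) else (2,2,3))"

lemma cis_shift_int: "cis (x + 2*pi* of_int m) = cis x"
proof -
  have A: "cis (x + 2*pi* of_int m) = cis x * cis (2*pi* of_int m)" by (rule cis_mult[symmetric])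
  have B: "cis (2*pi* of_int m) = 1" by (rule cis_multiple_2pi) simp
  show ?thesis using A B by simp
qed

lemma cis_2pi_shift: "cis (x + 2*pi) = cis x" "cis (x - 2*pi) = cis x"
  using cis_shift_int[of x 1] cis_shift_int[of x "-1"] by simp_all

lemma rotA_idx: "rotA (idx j) = cis (ctr j)"
proof -
  define m r where "m = j div 3" and "r = j mod 3"
  have j: "j = 3*m + r" unfolding m_def r_def by simp
  have r: "r = 0 \<or> r = 1 \<or> r = 2" unfolding r_def by auto
  have "ctr j = 2*pi*r/3 + 2*pi* of_int m" unfolding ctr_def j by (simp add: field_simps)
  hence c: "cis (ctr j) = cis (2*pi*r/3)" by (simp add: cis_shift_int)
  show ?thesis
  proof -
    { assume "r = 0" hence ?thesis using c by (simp add: idx_def rotA_def r_def[symmetric]) }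
    moreover
    { assume "r = 1" hence ?thesis using c by (simp add: idx_def rotA_def r_def[symmetric]) }
    moreover
    { assume r2: "r = 2"
      have "cis (2*pi*2/3) = cis (-2*pi/3 + 2*pi)" by (simp add: field_simps)
      also have "\<dots> = cis (-2*pi/3)" by (rule cis_2pi_shift)
      finally have ?thesis using c r2 by (simp add: idx_def rotA_def r_def[symmetric]) }
    ultimately show ?thesis using r by blast
  qed
qed

lemma idx_range: "idx j \<in> {1,2,3}" unfolding idx_def by auto

lemma arcA_Re: assumes "a \<in> {1,2,3}"
  shows "z \<in> arcA v a \<longleftrightarrow> cmod z = 1 \<and> v \<le> Re (z / rotA a)"
proof -
  have c1: "cis (- 2 * pi / 3) = Complex (-1/2) (-sqrt 3/2)"
    by (simp add: complex_eq_iff cos_120' sin_120' cos_120 sin_120)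
  have c2: "cis (2 * pi / 3) = Complex (-1/2) (sqrt 3/2)"
    by (simp add: complex_eq_iff cos_120 sin_120)
  have "Re (z / Complex (-1/2) (-sqrt 3/2)) = - (Re z + sqrt 3 * Im z) / 2"
    by (simp add: Re_divide power2_eq_square field_simps)
  moreover have "Re (z / Complex (-1/2) (sqrt 3/2)) = - (Re z - sqrt 3 * Im z) / 2"
    by (simp add: Re_divide power2_eq_square field_simps)
  ultimately show ?thesis using assms unfolding arcA_def kasner_circle_def rotA_def c1 c2
    by auto
qed

lemma cis_in_arc: assumes "ctr j - al \<le> x" "x \<le> ctr j + al"
  shows "cis x \<in> arcA v (idx j)"
proof -
  have "Re (cis x / rotA (idx j)) = cos (x - ctr j)" by (simp add: rotA_idx cis_divide)
  also have "cos (x - ctr j) = cos \<bar>x - ctr j\<bar>"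
  proof -
    have "cos (x - ctr j) = cos (ctr j - x)" by (metis cos_minus minus_diff_eq)
    thus ?thesis by (simp add: abs_real_def)
  qed
  also have "cos \<bar>x - ctr j\<bar> \<ge> cos al" using assms al_bounds
    by (intro cos_monotone_0_pi_le) auto
  finally show ?thesis using idx_range[of j] cos_al by (simp add: arcA_Re)
qed

lemma K1_cis: assumes "-pi < u" "u \<le> pi" shows "K1 v (cis u) = cis (g u)"
proof -
  have "Arg (cis u) = u" by (rule cis_Arg_unique) (use assms in auto)
  thus ?thesis unfolding K1_def g_def cc_def by simp
qed

lemma Kalpha_cis: assumes "ctr j - al \<le> x" "x \<le> ctr j + al"
  shows "Kalpha v (idx j) (cis x) = cis (gl j x)"
proof -
  have "Kalpha v (idx j) (cis x) = cis (ctr j) * K1 v (cis (x - ctr j))"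
    unfolding Kalpha_def rotA_idx by (simp add: cis_divide)
  also have "K1 v (cis (x - ctr j)) = cis (g (x - ctr j))" using assms al_bounds by (intro K1_cis) auto
  finally show ?thesis unfolding gl_def by (simp add: cis_mult)
qed

lemma triple_empty: "z \<notin> arcA v 1 \<inter> arcA v 2 \<inter> arcA v 3"
  unfolding arcA_def using v0 by auto

lemma Ksym_symj: assumes "z \<in> arcA v (idx j)" shows "Ksym v (symj j) z = Kalpha v (idx j) z"
proof -
  have t: "\<not> (z \<in> arcA v 1 \<and> z \<in> arcA v 2 \<and> z \<in> arcA v 3)" using triple_empty[of z] by auto
  have r: "j mod 3 = 0 \<or> j mod 3 = 1 \<or> j mod 3 = 2" by auto
  from r show ?thesis
  proof (elim disjE)
    assume h: "j mod 3 = 0"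
    hence "idx j = 1" "symj j = (1,2,1)" by (simp_all add: idx_def symj_def)
    thus ?thesis using assms t unfolding Ksym_def by auto
  next
    assume h: "j mod 3 = 1"
    hence "idx j = 3" "symj j = (1,3,3)" by (simp_all add: idx_def symj_def)
    thus ?thesis using assms t unfolding Ksym_def by auto
  next
    assume h: "j mod 3 = 2"
    hence "idx j = 2" "symj j = (2,2,3)" by (simp_all add: idx_def symj_def)
    thus ?thesis using assms t unfolding Ksym_def by auto
  qed
qed

lemma Ksym_cis: assumes "ctr j - al \<le> x" "x \<le> ctr j + al"
  shows "Ksym v (symj j) (cis x) = cis (gl j x)"
  using Ksym_symj[OF cis_in_arc[OF assms]] Kalpha_cis[OF assms] by simp

lemma valid_symj: "valid_seq (\<lambda>n. symj (f n))"
  unfolding valid_seq_def symj_def by auto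

lemma valid_upd: "valid_seq om \<Longrightarrow> valid_seq (om(n := symj j))"
  unfolding valid_seq_def symj_def by auto

lemma Kiter_cong: "(\<And>i. i < n \<Longrightarrow> om i = om' i) \<Longrightarrow> Kiter v om n x = Kiter v om' n x"
  by (induction n) auto

lemma Kiter_upd_step: "Kiter v (om(n := s)) (Suc n) x = Ksym v s (Kiter v om n x)"
proof -
  have "Kiter v (om(n := s)) n x = Kiter v om n x" by (rule Kiter_cong) auto
  thus ?thesis by simp
qed

definition seqcat :: "(nat \<Rightarrow> nat \<times> nat \<times> nat) \<Rightarrow> nat \<Rightarrow> (nat \<Rightarrow> nat \<times> nat \<times> nat) \<Rightarrow> nat \<Rightarrow> nat \<times> nat \<times> nat" where
  "seqcat om1 n1 om2 i = (if i < n1 then om1 i else om2 (i - n1))"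

lemma valid_seqcat: "valid_seq om1 \<Longrightarrow> valid_seq om2 \<Longrightarrow> valid_seq (seqcat om1 n1 om2)"
  unfolding valid_seq_def seqcat_def by auto

lemma Kiter_seqcat: "Kiter v (seqcat om1 n1 om2) (n1 + n2) x = Kiter v om2 n2 (Kiter v om1 n1 x)"
proof (induction n2)
  case 0
  show ?case by simp (rule Kiter_cong, simp add: seqcat_def)
next
  case (Suc n2)
  thus ?case by (simp add: seqcat_def)
qed

lemma ctr_succ: "ctr (j+1) = ctr j + 2*pi/3" unfolding ctr_def by (simp add: field_simps)
lemma ctr_shift: "ctr (j + 3*m) = ctr j + 2*pi* of_int m" unfolding ctr_def by (simp add: field_simps)
lemma al1_eq: "al1 = pi/3 + w/2" unfolding al1_def w_def by (simp add: field_simps)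

lemma gl_noncontr: "ctr j - al \<le> x \<Longrightarrow> x \<le> y \<Longrightarrow> y \<le> ctr j + al \<Longrightarrow> y - x \<le> gl j x - gl j y"
  using g_noncontr[of "x - ctr j" "y - ctr j"] unfolding gl_def by auto

lemma gl_expand: "ctr j - al1 \<le> x \<Longrightarrow> x \<le> y \<Longrightarrow> y \<le> ctr j + al1 \<Longrightarrow> lam*(y - x) \<le> gl j x - gl j y"
  using g_expand[of "x - ctr j" "y - ctr j"] unfolding gl_def by auto

lemma gl_right: "gl j (ctr j + al) = ctr j + al" unfolding gl_def using g_al by simp
lemma gl_left: "gl j (ctr j - al) = ctr j - al + 2*pi" unfolding gl_def using g_mal by simp

lemma gl_range: assumes "ctr j - al \<le> x" "x \<le> ctr j + al"
  shows "ctr j + al \<le> gl j x" "gl j x \<le> ctr j - al + 2*pi"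
  using gl_noncontr[of j x "ctr j + al"] gl_noncontr[of j "ctr j - al" x] assms gl_right gl_left by auto

lemma gl_isCont: assumes "ctr j - al \<le> x" "x \<le> ctr j + al" shows "isCont (gl j) x"
proof -
  have "\<bar>x - ctr j\<bar> < pi" using assms al_bounds by auto
  hence c1: "isCont g (x - ctr j)" by (rule isCont_g)
  have c0: "isCont (\<lambda>x. x - ctr j) x" by (rule isCont_diff[OF continuous_ident continuous_const])
  have "isCont (\<lambda>x. g (x - ctr j)) x" by (rule isCont_o2[OF c0 c1])
  hence "isCont (\<lambda>x. ctr j + g (x - ctr j)) x" by (rule isCont_add[OF continuous_const])
  thus ?thesis unfolding gl_def[abs_def] .
qed

lemma gl_cont_on: assumes "S \<subseteq> {ctr j - al .. ctr j + al}" shows "continuous_on S (gl j)"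
  using gl_isCont assms by (intro continuous_at_imp_continuous_on) auto

lemma gl_image: assumes "ctr j - al \<le> a" "a \<le> b" "b \<le> ctr j + al"
  shows "gl j ` {a..b} = {gl j b .. gl j a}"
proof
  show "gl j ` {a..b} \<subseteq> {gl j b .. gl j a}"
  proof
    fix y assume "y \<in> gl j ` {a..b}"
    then obtain x where x: "a \<le> x" "x \<le> b" "y = gl j x" by auto
    have "x - a \<le> gl j a - gl j x" using assms x by (intro gl_noncontr) auto
    moreover have "b - x \<le> gl j x - gl j b" using assms x by (intro gl_noncontr) auto
    ultimately show "y \<in> {gl j b .. gl j a}" using x by auto
  qed
  show "{gl j b .. gl j a} \<subseteq> gl j ` {a..b}"
  proof
    fix y assume "y \<in> {gl j b .. gl j a}"
    then obtain x where "a \<le> x" "x \<le> b" "gl j x = y"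
      using IVT2[of "gl j" b y a] gl_isCont[of j] assms by auto
    thus "y \<in> gl j ` {a..b}" by auto
  qed
qed

lemma gl_growth:
  assumes "ctr j - al \<le> a" "a \<le> b" "b \<le> ctr j + al"
    and "max a (ctr j - al1) \<le> min b (ctr j + al1)"
  shows "(b - a) + (lam - 1)*(min b (ctr j + al1) - max a (ctr j - al1)) \<le> gl j a - gl j b"
proof -
  define a' b' where "a' = max a (ctr j - al1)" and "b' = min b (ctr j + al1)"
  have ab: "a \<le> a'" "a' \<le> b'" "b' \<le> b" using assms(4) unfolding a'_def b'_def by auto
  have c: "ctr j - al1 \<le> a'" "b' \<le> ctr j + al1" unfolding a'_def b'_def by auto
  have "a' - a \<le> gl j a - gl j a'" using assms(1) ab c al1_bounds'
    by (intro gl_noncontr) linarith+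
  moreover have "lam*(b' - a') \<le> gl j a' - gl j b'" using ab c by (intro gl_expand) linarith+
  moreover have "b - b' \<le> gl j b' - gl j b" using assms(3) ab c al1_bounds'
    by (intro gl_noncontr) linarith+
  ultimately have "(b - a) + (lam - 1)*(b' - a') \<le> gl j a - gl j b" by (simp add: algebra_simps)
  thus ?thesis unfolding a'_def b'_def .
qed

lemma nearest_ctr: "\<exists>j. \<bar>m - ctr j\<bar> \<le> pi/3"
proof -
  define j where "j = \<lfloor>3*m/(2*pi) + 1/2\<rfloor>"
  have "of_int j \<le> 3*m/(2*pi) + 1/2" "3*m/(2*pi) + 1/2 < of_int j + 1" unfolding j_def by linarith+
  hence "2*pi* of_int j \<le> 3*m + pi" "3*m + pi < 2*pi* of_int j + 2*pi" using pi_gt_zero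
    by (simp_all add: field_simps)
  hence "-(pi/3) \<le> m - ctr j" "m - ctr j \<le> pi/3" unfolding ctr_def by linarith+
  hence "\<bar>m - ctr j\<bar> \<le> pi/3" by (intro abs_leI) linarith+
  thus ?thesis by blast
qed

lemma floor_ctr: "\<exists>j. ctr j \<le> y \<and> y < ctr (j+1)"
proof -
  define j where "j = \<lfloor>3*y/(2*pi)\<rfloor>"
  have "of_int j \<le> 3*y/(2*pi)" "3*y/(2*pi) < of_int j + 1" unfolding j_def by linarith+
  hence "2*pi* of_int j \<le> 3*y" "3*y < 2*pi* of_int j + 2*pi" using pi_gt_zero
    by (simp_all add: field_simps)
  hence "ctr j \<le> y \<and> y < ctr (j+1)" unfolding ctr_def by (auto simp: field_simps)
  thus ?thesis by blast
qed

end

context kas begin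

lemma P1:
  fixes Q :: "real \<Rightarrow> real \<Rightarrow> bool"
  assumes clos: "\<And>a b j. Q a b \<Longrightarrow> a < b \<Longrightarrow> ctr j - al \<le> a \<Longrightarrow> b \<le> ctr j + al \<Longrightarrow> Q (gl j b) (gl j a)"
    and init: "Q s t" "s < t"
  shows "\<exists>a b j. Q a b \<and> a \<le> ctr (j+1) - al \<and> ctr j + al \<le> b"
proof -
  define d where "d = (lam - 1) * min (t - s) (w/2)"
  have dpos: "d > 0" using lam_gt1 w_pos init(2) unfolding d_def by auto
  let ?G = "\<exists>a b j. Q a b \<and> a \<le> ctr (j+1) - al \<and> ctr j + al \<le> b"
  have step: "?G \<or> (\<exists>a' b'. Q a' b' \<and> a' < b' \<and> (b - a) + d \<le> b' - a' \<and> b - a \<le> 2*al)"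
    if ab: "Q a b" "a < b" "t - s \<le> b - a" for a b
  proof (cases "b - a \<le> w")
    case True
    obtain j where j: "\<bar>(a+b)/2 - ctr j\<bar> \<le> pi/3" using nearest_ctr by blast
    have j1: "-(pi/3) \<le> (a+b)/2 - ctr j" using abs_le_D2[OF j] by linarith
    have j2: "(a+b)/2 - ctr j \<le> pi/3" using abs_le_D1[OF j] by linarith
    have in1a: "ctr j - al1 \<le> a" using j1 j2 True al1_eq by argo
    have in1b: "b \<le> ctr j + al1" using j1 j2 True al1_eq by argo
    note in1 = in1a in1b
    have e: "lam*(b - a) \<le> gl j a - gl j b" using in1 ab by (intro gl_expand) auto
    have "d \<le> (lam - 1)*(b - a)" unfolding d_def using ab lam_gt1 by (intro mult_left_mono) auto
    hence "(b - a) + d \<le> gl j a - gl j b" using e by (simp add: algebra_simps)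
    moreover have "Q (gl j b) (gl j a)" using clos[OF ab(1,2)] in1 al1_bounds' by auto
    moreover have "b - a \<le> 2*al" using True w_pos al_bounds unfolding w_def by linarith
    ultimately show ?thesis using dpos ab(2) by (intro disjI2 exI[of _ "gl j b"] exI[of _ "gl j a"]) auto
  next
    case False
    obtain j where j: "ctr j \<le> a + al" "a + al < ctr (j+1)" using floor_ctr by blast
    show ?thesis
    proof (cases "b \<le> ctr j + al")
      case True
      have a1: "ctr j - al \<le> a" using j by linarith
      have f: "al1 = al - w/2" "pi/3 < al1" "w < pi/6" using al1_def al1_bounds' w_small by simp_all
      have F: "b - a > w" "a < b" using False ab(2) by auto
      have mm: "max a (ctr j - al1) \<le> min b (ctr j + al1)"
        unfolding max_def min_def using a1 True F f w_pos by (split if_split)+ linarith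
      have ge: "w/2 \<le> min b (ctr j + al1) - max a (ctr j - al1)"
        unfolding max_def min_def using a1 True F f w_pos by (split if_split)+ linarith
      have gr: "(b - a) + (lam - 1)*(min b (ctr j + al1) - max a (ctr j - al1)) \<le> gl j a - gl j b"
        using a1 True ab(2) mm by (intro gl_growth) auto
      have "d \<le> (lam - 1)*(w/2)" unfolding d_def using lam_gt1 by (intro mult_left_mono) (auto simp: min_def)
      also have "\<dots> \<le> (lam - 1)*(min b (ctr j + al1) - max a (ctr j - al1))"
        using ge lam_gt1 by (intro mult_left_mono) auto
      finally have "(b - a) + d \<le> gl j a - gl j b" using gr by linarith
      moreover have "Q (gl j b) (gl j a)" using clos[OF ab(1,2) a1 True] .
      moreover have "b - a \<le> 2*al" using a1 True by linarith
      ultimately show ?thesis using dpos ab(2) by (intro disjI2 exI[of _ "gl j b"] exI[of _ "gl j a"]) auto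
    next
      case False
      hence "Q a b \<and> a \<le> ctr (j+1) - al \<and> ctr j + al \<le> b" using ab j by auto
      thus ?thesis by blast
    qed
  qed
  have iter: "?G \<or> (\<exists>a b. Q a b \<and> a < b \<and> (t - s) + real k * d \<le> b - a)" for k
  proof (induction k)
    case 0
    then show ?case using init by auto
  next
    case (Suc k)
    show ?case
    proof (cases ?G)
      case True thus ?thesis by (rule disjI1)
    next
      case False
      with Suc.IH obtain a b where ab: "Q a b" "a < b" "(t - s) + real k * d \<le> b - a" by blast
      have "0 \<le> real k * d" using dpos by simp
      hence "t - s \<le> b - a" using ab(3) by linarith
      with step[OF ab(1,2)] False obtain a' b' where
        ab': "Q a' b'" "a' < b'" "(b - a) + d \<le> b' - a'" by blast
      have "(t - s) + real (Suc k) * d \<le> b' - a'" using ab(3) ab'(3) by (simp add: algebra_simps)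
      thus ?thesis using ab' by blast
    qed
  qed
  obtain k where k: "2*al < real k * d" using reals_Archimedean3[OF dpos] by blast
  show ?thesis
  proof (rule ccontr)
    assume nG: "\<not> ?G"
    with iter[of k] obtain a b where ab: "Q a b" "a < b" "(t - s) + real k * d \<le> b - a" by blast
    have "0 \<le> real k * d" using dpos by simp
    hence "t - s \<le> b - a" using ab(3) by linarith
    with step[OF ab(1,2)] nG have "b - a \<le> 2*al" by blast
    thus False using ab(3) k init(2) by linarith
  qed
qed

end

context kas begin

lemma per_nat: assumes per: "\<And>x. P (x + 2*pi) = P x" shows "P (x + 2*pi* of_nat n) = P x"
proof (induction n)
  case (Suc n)
  have "P (x + 2*pi* of_nat (Suc n)) = P ((x + 2*pi* of_nat n) + 2*pi)" by (simp add: algebra_simps)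
  also have "\<dots> = P (x + 2*pi* of_nat n)" by (rule per)
  finally show ?case using Suc by simp
qed simp

lemma per_int: assumes per: "\<And>x. P (x + 2*pi) = P x" shows "P (x + 2*pi* of_int m) = P x"
proof (cases "m \<ge> 0")
  case True
  define n where "n = nat m"
  have "m = int n" using True unfolding n_def by simp
  thus ?thesis using per_nat[of P x n, OF per] by simp
next
  case False
  define n where "n = nat (-m)"
  have n: "m = - int n" using False unfolding n_def by simp
  have "P ((x + 2*pi* of_int m) + 2*pi* of_nat n) = P (x + 2*pi* of_int m)" by (rule per_nat[where P=P, OF per])
  thus ?thesis using n by simp
qed

lemma per_all: assumes per: "\<And>x. P (x + 2*pi) = P x" and base: "\<forall>y\<in>{c..c+2*pi}. P y" shows "P x"
proof -
  define m where "m = \<lfloor>(x - c)/(2*pi)\<rfloor>"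
  have "of_int m \<le> (x - c)/(2*pi)" "(x - c)/(2*pi) < of_int m + 1" unfolding m_def by linarith+
  hence "2*pi* of_int m \<le> x - c" "x - c < 2*pi* of_int m + 2*pi" using pi_gt_zero by (simp_all add: field_simps)
  hence "P (x - 2*pi* of_int m)" using base by auto
  moreover have "P ((x - 2*pi* of_int m) + 2*pi* of_int m) = P (x - 2*pi* of_int m)" by (rule per_int[where P=P, OF per])
  ultimately show ?thesis by simp
qed

lemma img:
  assumes inv: "\<And>j x. ctr j - al \<le> x \<Longrightarrow> x \<le> ctr j + al \<Longrightarrow> P x \<Longrightarrow> P (gl j x)"
    and ab: "ctr j - al \<le> a" "a \<le> b" "b \<le> ctr j + al" and P: "\<forall>x\<in>{a..b}. P x"
  shows "\<forall>x\<in>{gl j b..gl j a}. P x"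
proof
  fix y assume "y \<in> {gl j b..gl j a}"
  hence "y \<in> gl j ` {a..b}" using gl_image[OF ab] by simp
  then obtain x where x: "x \<in> {a..b}" "y = gl j x" by auto
  thus "P y" using inv[of j x] ab P by auto
qed

lemma P2:
  assumes per: "\<And>x. P (x + 2*pi) = P x"
    and inv: "\<And>j x. ctr j - al \<le> x \<Longrightarrow> x \<le> ctr j + al \<Longrightarrow> P x \<Longrightarrow> P (gl j x)"
    and ov: "\<forall>x\<in>{ctr (j+1) - al .. ctr j + al}. P x"
  shows "P x"
proof -
  define e f where "e = ctr (j+1) - al" and "f = ctr j + al"
  have fe: "f - e = 2*w" unfolding e_def f_def w_def ctr_succ by simp
  define Z where "Z k = min (2*al) (2*w* of_nat k)" for k :: nat
  have Zn: "0 \<le> Z k" for k unfolding Z_def using w_pos al_bounds by auto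
  have Zs: "Z (Suc k) \<le> min (2*w + Z k) (2*al)" for k
    unfolding Z_def using w_pos by (auto simp: min_def algebra_simps)
  have claim: "\<forall>x\<in>{e - Z k .. f + Z k}. P x" for k
  proof (induction k)
    case 0
    have "min (2*al) 0 = 0" using al_bounds by (simp add: min_def)
    thus ?case using ov unfolding Z_def e_def f_def by simp
  next
    case (Suc k)
    define top where "top = min (f + Z k) (ctr (j+1) + al)"
    define bot where "bot = max (e - Z k) (ctr j - al)"
    have t1: "ctr (j+1) - al \<le> e" "e \<le> top" "top \<le> ctr (j+1) + al"
      unfolding top_def e_def using fe w_pos Zn[of k] al_bounds e_def f_def by (auto simp: min_def)
    have Pt: "\<forall>x\<in>{e..top}. P x" using Suc.IH Zn[of k] unfolding top_def by auto
    have L: "\<forall>x\<in>{gl (j+1) top .. gl (j+1) e}. P x" by (rule img[where P=P, OF inv t1 Pt])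
    have gle: "gl (j+1) e = e + 2*pi" unfolding e_def by (rule gl_left)
    have nc: "top - e \<le> gl (j+1) e - gl (j+1) top" using t1 by (intro gl_noncontr) auto
    have tz: "Z (Suc k) \<le> top - e" using Zs[of k] fe unfolding top_def e_def f_def ctr_succ
      by (auto simp: min_def)
    have b1: "ctr j - al \<le> bot" "bot \<le> f" "f \<le> ctr j + al"
      unfolding bot_def f_def using fe w_pos Zn[of k] al_bounds e_def f_def by (auto simp: max_def)
    have Pb: "\<forall>x\<in>{bot..f}. P x" using Suc.IH Zn[of k] unfolding bot_def by auto
    have R: "\<forall>x\<in>{gl j f .. gl j bot}. P x" by (rule img[where P=P, OF inv b1 Pb])
    have glf: "gl j f = f" unfolding f_def by (rule gl_right)
    have nc2: "f - bot \<le> gl j bot - gl j f" using b1 by (intro gl_noncontr) auto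
    have bz: "Z (Suc k) \<le> f - bot" using Zs[of k] fe unfolding bot_def e_def f_def ctr_succ
      by (auto simp: max_def)
    show ?case
    proof
      fix x assume x: "x \<in> {e - Z (Suc k) .. f + Z (Suc k)}"
      show "P x"
      proof (cases "x < e")
        case True
        have "x + 2*pi \<in> {gl (j+1) top .. gl (j+1) e}" using True x gle nc tz by auto
        hence "P (x + 2*pi)" using L by blast
        thus ?thesis using per by simp
      next
        case False
        show ?thesis
        proof (cases "x \<le> f")
          case True
          thus ?thesis using False Suc.IH Zn[of k] by auto
        next
          case False
          have "x \<in> {gl j f .. gl j bot}" using False x glf nc2 bz by auto
          thus ?thesis using R by blast
        qed
      qed
    qed
  qed
  define k where "k = nat \<lceil>al/w\<rceil>"
  have "al/w \<le> of_nat k" unfolding k_def by linarith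
  hence "al \<le> w * of_nat k" using w_pos by (simp add: field_simps)
  hence Zk: "Z k = 2*al" unfolding Z_def by auto
  have ee: "e - 2*al \<le> ctr j - al" "ctr j + al \<le> f + 2*al"
    unfolding e_def f_def ctr_succ using al_bounds by auto
  have PI: "\<forall>x\<in>{ctr j - al .. ctr j + al}. P x"
    using claim[of k] Zk ee by auto
  have PD: "\<forall>x\<in>{gl j (ctr j + al) .. gl j (ctr j - al)}. P x"
    by (rule img[where P=P, OF inv _ _ _ PI]) (use al_bounds in auto)
  have PD': "\<forall>x\<in>{ctr j + al .. ctr j - al + 2*pi}. P x" using PD by (simp only: gl_right gl_left)
  have "\<forall>y\<in>{ctr j - al .. ctr j - al + 2*pi}. P y"
  proof
    fix y assume y: "y \<in> {ctr j - al .. ctr j - al + 2*pi}"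
    show "P y"
    proof (cases "y \<le> ctr j + al")
      case True thus ?thesis using y PI by auto
    next
      case False thus ?thesis using y PD' by auto
    qed
  qed
  thus ?thesis by (rule per_all[where P=P, OF per])
qed

end

context kas begin

lemma CORE:
  assumes per: "\<And>x. P (x + 2*pi) = P x"
    and inv: "\<And>j x. ctr j - al \<le> x \<Longrightarrow> x \<le> ctr j + al \<Longrightarrow> P x \<Longrightarrow> P (gl j x)"
    and st: "s < t" "\<forall>x\<in>{s..t}. P x"
  shows "P x"
proof -
  define Q where "Q a b = (a < b \<and> (\<forall>x\<in>{a..b}. P x))" for a b
  have "\<exists>a b j. Q a b \<and> a \<le> ctr (j+1) - al \<and> ctr j + al \<le> b"
  proof (rule P1)
    fix a b j assume q: "Q a b" "a < b" "ctr j - al \<le> a" "b \<le> ctr j + al"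
    have "b - a \<le> gl j a - gl j b" using q by (intro gl_noncontr) auto
    moreover have "\<forall>x\<in>{gl j b..gl j a}. P x" using q unfolding Q_def by (intro img[where P=P, OF inv]) auto
    ultimately show "Q (gl j b) (gl j a)" unfolding Q_def using q by auto
  next
    show "Q s t" "s < t" using st unfolding Q_def by auto
  qed
  then obtain a b j where "Q a b" "a \<le> ctr (j+1) - al" "ctr j + al \<le> b" by blast
  hence ov: "\<forall>x\<in>{ctr (j+1) - al .. ctr j + al}. P x" unfolding Q_def by auto
  from P2[where P=P and j=j, OF per inv ov] show ?thesis .
qed

end

context kas begin

lemma chord: "cmod (cis x - cis y) = 2 * \<bar>sin ((x - y)/2)\<bar>"
proof -
  have "(cmod (cis x - cis y))^2 = (cos x - cos y)^2 + (sin x - sin y)^2" by (simp add: cmod_power2)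
  also have "\<dots> = ((sin x)^2 + (cos x)^2) + ((sin y)^2 + (cos y)^2) - 2*(cos x * cos y + sin x * sin y)"
    by (simp add: power2_eq_square algebra_simps)
  also have "\<dots> = 2 - 2 * cos (x - y)" by (simp add: cos_diff)
  also have "cos (x - y) = 1 - 2 * sin ((x-y)/2) ^ 2"
  proof -
    have ee: "2*((x-y)/2) = x - y" by simp
    show ?thesis using cos_double_sin[of "(x-y)/2"] unfolding ee .
  qed
  finally have "(cmod (cis x - cis y))^2 = (2 * \<bar>sin ((x - y)/2)\<bar>)^2" by (simp add: power2_eq_square)
  thus ?thesis by (rule power2_eq_imp_eq) auto
qed

lemma cis_dist_le: "cmod (cis x - cis y) \<le> \<bar>x - y\<bar>"
  using chord[of x y] abs_sin_x_le_abs_x[of "(x-y)/2"] by simp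

lemma circ_cis: assumes "z \<in> kasner_circle" shows "cis (Arg z) = z"
proof -
  have "cmod z = 1" using assms unfolding kasner_circle_def by simp
  hence "z \<noteq> 0" by auto
  hence "cis (Arg z) = sgn z" by (rule cis_Arg)
  thus ?thesis using \<open>cmod z = 1\<close> by (simp add: sgn_div_norm)
qed

lemma cis_circ: "cis x \<in> kasner_circle" unfolding kasner_circle_def by simp

lemma open_arc:
  assumes U: "openin (top_of_set kasner_circle) U" and p: "cis x0 \<in> U"
  shows "\<exists>e>0. \<forall>x. \<bar>x - x0\<bar> \<le> e \<longrightarrow> cis x \<in> U"
proof -
  obtain e where e: "e > 0" "ball (cis x0) e \<inter> kasner_circle \<subseteq> U"
    using U p unfolding openin_contains_ball by blast
  have "\<forall>x. \<bar>x - x0\<bar> \<le> e/2 \<longrightarrow> cis x \<in> U"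
  proof (intro allI impI)
    fix x assume x: "\<bar>x - x0\<bar> \<le> e/2"
    have "dist (cis x0) (cis x) \<le> \<bar>x0 - x\<bar>" unfolding dist_norm by (rule cis_dist_le)
    hence "dist (cis x0) (cis x) < e" using x e(1) by linarith
    thus "cis x \<in> U" using e(2) cis_circ by auto
  qed
  thus ?thesis using e(1) by (intro exI[of _ "e/2"]) auto
qed

lemma deep_ctr: "\<exists>j. \<forall>x. \<bar>x - x0\<bar> \<le> w/2 \<longrightarrow> ctr j - al1 \<le> x \<and> x \<le> ctr j + al1"
proof -
  obtain j where j: "\<bar>x0 - ctr j\<bar> \<le> pi/3" using nearest_ctr by blast
  have "\<forall>x. \<bar>x - x0\<bar> \<le> w/2 \<longrightarrow> ctr j - al1 \<le> x \<and> x \<le> ctr j + al1"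
  proof (intro allI impI)
    fix x assume x: "\<bar>x - x0\<bar> \<le> w/2"
    have "x0 - ctr j \<le> pi/3" "-(x0 - ctr j) \<le> pi/3" using abs_le_D1[OF j] abs_le_D2[OF j] by auto
    moreover have "x - x0 \<le> w/2" "-(x - x0) \<le> w/2" using abs_le_D1[OF x] abs_le_D2[OF x] by auto
    ultimately show "ctr j - al1 \<le> x \<and> x \<le> ctr j + al1" using al1_eq by argo
  qed
  thus ?thesis by blast
qed

lemma transitive: "top_transitive v"
  unfolding top_transitive_def
proof (intro allI impI)
  fix U V assume UV: "openin (top_of_set kasner_circle) U \<and> U \<noteq> {} \<and> openin (top_of_set kasner_circle) V \<and> V \<noteq> {}"
  obtain p where p: "p \<in> U" using UV by blast
  have pC: "p \<in> kasner_circle" using p UV openin_subset by fastforce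
  define x0 where "x0 = Arg p"
  have px: "cis x0 = p" unfolding x0_def by (rule circ_cis[OF pC])
  obtain e where e: "e > 0" "\<forall>x. \<bar>x - x0\<bar> \<le> e \<longrightarrow> cis x \<in> U"
    using open_arc[of U x0] UV p px by auto
  define e' where "e' = min e (w/2)"
  have e': "e' > 0" "e' \<le> e" "e' \<le> w/2" unfolding e'_def using e w_pos by auto
  obtain j where j: "\<forall>x. \<bar>x - x0\<bar> \<le> w/2 \<longrightarrow> ctr j - al1 \<le> x \<and> x \<le> ctr j + al1"
    using deep_ctr by blast
  have jI: "ctr j - al \<le> x \<and> x \<le> ctr j + al" if "\<bar>x - x0\<bar> \<le> e'" for x
  proof -
    have "\<bar>x - x0\<bar> \<le> w/2" using that e' by linarith
    hence "ctr j - al1 \<le> x \<and> x \<le> ctr j + al1" using j by blast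
    thus ?thesis using al1_bounds' by auto
  qed
  define R where "R = {y. \<exists>x\<in>U. \<exists>n\<ge>1. \<exists>om. valid_seq om \<and> Kiter v om n x = y}"
  define P where "P x = (cis x \<in> R)" for x
  have allP: "P x" for x
  proof (rule CORE[where P=P])
    show "P (x + 2*pi) = P x" for x unfolding P_def by (simp add: cis_2pi_shift)
  next
    fix j' x assume x: "ctr j' - al \<le> x" "x \<le> ctr j' + al" "P x"
    then obtain x1 n om where h: "x1 \<in> U" "n \<ge> 1" "valid_seq om" "Kiter v om n x1 = cis x"
      unfolding P_def R_def by blast
    have K: "Kiter v (om(n := symj j')) (Suc n) x1 = cis (gl j' x)"
      using Kiter_upd_step[of om n "symj j'" x1] h(4) Ksym_cis[OF x(1,2)] by simp
    have V1: "valid_seq (om(n := symj j'))" by (rule valid_upd[OF h(3)])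
    have S1: "Suc n \<ge> 1" by simp
    show "P (gl j' x)" unfolding P_def R_def using h(1) K V1 S1 by blast
  next
    have le: "x0 - e' \<le> x0 + e'" using e' by simp
    have a1: "ctr j - al \<le> x0 - e'" using jI[of "x0 - e'"] e' by auto
    have a2: "x0 + e' \<le> ctr j + al" using jI[of "x0 + e'"] e' by auto
    have "(x0 + e') - (x0 - e') \<le> gl j (x0 - e') - gl j (x0 + e')"
      using a1 le a2 by (rule gl_noncontr)
    hence "2*e' \<le> gl j (x0 - e') - gl j (x0 + e')" by simp
    thus "gl j (x0 + e') < gl j (x0 - e')" using e' by linarith
    show "\<forall>y\<in>{gl j (x0 + e')..gl j (x0 - e')}. P y"
    proof
      fix y assume "y \<in> {gl j (x0 + e')..gl j (x0 - e')}"
      hence "y \<in> gl j ` {x0 - e' .. x0 + e'}"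
        using gl_image[of j "x0 - e'" "x0 + e'"] jI[of "x0 - e'"] jI[of "x0 + e'"] e' by auto
      then obtain x where x: "x \<in> {x0 - e' .. x0 + e'}" "y = gl j x" by auto
      have xa: "\<bar>x - x0\<bar> \<le> e'" using x(1) by auto
      have "Kiter v (\<lambda>_. symj j) 1 (cis x) = cis y" using Ksym_cis[of j x] jI[OF xa] x(2) by simp
      moreover have "cis x \<in> U" using e(2) xa e' by auto
      moreover have "valid_seq (\<lambda>_. symj j)" using valid_symj[of "\<lambda>_. j"] by simp
      moreover have "(1::nat) \<ge> 1" by simp
      ultimately show "P y" unfolding P_def R_def by blast
    qed
  qed
  obtain q where q: "q \<in> V" using UV by blast
  have qC: "q \<in> kasner_circle" using q UV openin_subset by fastforce
  have "P (Arg q)" by (rule allP)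
  hence "q \<in> R" unfolding P_def using circ_cis[OF qC] by simp
  then obtain x n om where "x \<in> U" "n \<ge> 1" "valid_seq om" "Kiter v om n x = q" unfolding R_def by blast
  thus "\<exists>n\<ge>1. \<exists>om. valid_seq om \<and> Kiter v om n ` U \<inter> V \<noteq> {}" using q by blast
qed

end

context kas begin

lemma gl_expand_abs:
  assumes "ctr j - al1 \<le> x" "x \<le> ctr j + al1" "ctr j - al1 \<le> y" "y \<le> ctr j + al1"
  shows "lam * \<bar>x - y\<bar> \<le> \<bar>gl j x - gl j y\<bar>"
proof (cases "x \<le> y")
  case True
  have "lam*(y - x) \<le> gl j x - gl j y" using assms True by (intro gl_expand) auto
  thus ?thesis using True by (auto simp: abs_real_def)
next
  case False
  have "lam*(x - y) \<le> gl j y - gl j x" using assms False by (intro gl_expand) auto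
  thus ?thesis using False by (auto simp: abs_real_def)
qed

lemma gl_diff_le:
  assumes "ctr j - al \<le> x" "x \<le> ctr j + al" "ctr j - al \<le> y" "y \<le> ctr j + al"
  shows "\<bar>gl j x - gl j y\<bar> \<le> 2*pi - 2*al"
  using gl_range[OF assms(1,2)] gl_range[OF assms(3,4)] by (simp add: abs_real_def)

lemma abs_sin_half: "\<bar>sin ((a::real)/2)\<bar> = \<bar>sin (\<bar>a\<bar>/2)\<bar>"
proof (cases "a \<ge> 0")
  case False
  hence "\<bar>a\<bar>/2 = - (a/2)" by simp
  hence "sin (\<bar>a\<bar>/2) = - sin (a/2)" by (simp only: sin_minus)
  thus ?thesis by simp
qed simp

lemma sin_lower:
  assumes "w/2 \<le> D" "D \<le> 2*pi - 2*al"
  shows "sin (w/4) \<le> \<bar>sin (D/2)\<bar>"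
proof -
  have w: "0 < w" "w < pi/6" using w_pos w_small by auto
  have s: "sin (w/4) \<le> sin (D/2)"
  proof (cases "D/2 \<le> pi/2")
    case True thus ?thesis using assms w by (intro sin_monotone_2pi_le) auto
  next
    case False
    have "sin (D/2) = sin (pi - D/2)" by simp
    moreover have "sin (w/4) \<le> sin (pi - D/2)" using assms w False al_bounds by (intro sin_monotone_2pi_le) auto
    ultimately show ?thesis by simp
  qed
  moreover have "0 \<le> sin (w/4)" using w by (intro sin_ge_zero) auto
  ultimately show ?thesis by linarith
qed

lemma sensitive: "sensitive v"
  unfolding sensitive_def
proof (intro exI[of _ "2 * sin (w/4)"] conjI ballI allI impI)
  show "0 < 2 * sin (w/4)" using w_pos w_small by (simp add: sin_gt_zero)
  fix p U assume pC: "p \<in> kasner_circle" and U: "openin (top_of_set kasner_circle) U \<and> p \<in> U"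
  define x0 where "x0 = Arg p"
  have px: "cis x0 = p" unfolding x0_def by (rule circ_cis[OF pC])
  obtain e where e: "e > 0" "\<forall>x. \<bar>x - x0\<bar> \<le> e \<longrightarrow> cis x \<in> U"
    using open_arc[of U x0] U px by auto
  define d where "d = min e (w/4)"
  have d: "0 < d" "d \<le> e" "d < w/2" unfolding d_def using e w_pos by auto
  define q where "q = cis (x0 + d)"
  have qU: "q \<in> U" unfolding q_def using e d by auto
  have "cmod (p - q) = 2 * \<bar>sin ((x0 - (x0 + d))/2)\<bar>" unfolding q_def px[symmetric] by (rule chord)
  also have "\<dots> > 0"
  proof -
    have "0 < sin (d/2)" using d w_small by (intro sin_gt_zero) auto
    thus ?thesis by simp
  qed
  finally have qp: "q \<noteq> p" by auto
  define Jc where "Jc x = (SOME j. \<bar>x - ctr j\<bar> \<le> pi/3)" for x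
  have Jc: "\<bar>x - ctr (Jc x)\<bar> \<le> pi/3" for x unfolding Jc_def using nearest_ctr by (rule someI_ex)
  have JcI: "ctr (Jc x) - al \<le> x \<and> x \<le> ctr (Jc x) + al" for x
  proof -
    have "x - ctr (Jc x) \<le> pi/3" "-(x - ctr (Jc x)) \<le> pi/3" using abs_le_D1[OF Jc[of x]] abs_le_D2[OF Jc[of x]] by auto
    thus ?thesis using al_bounds by auto
  qed
  define stp where "stp z = (gl (Jc (fst z)) (fst z), gl (Jc (fst z)) (snd z))" for z :: "real \<times> real"
  define X where "X k = fst ((stp ^^ k) (x0, x0 + d))" for k
  define Y where "Y k = snd ((stp ^^ k) (x0, x0 + d))" for k
  have XS: "X (Suc k) = gl (Jc (X k)) (X k)" "Y (Suc k) = gl (Jc (X k)) (Y k)" for k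
    unfolding X_def Y_def by (simp_all add: stp_def)
  have X0: "X 0 = x0" "Y 0 = x0 + d" unfolding X_def Y_def by simp_all
  define om where "om k = symj (Jc (X k))" for k
  have vom: "valid_seq om" unfolding om_def by (rule valid_symj)
  have KX: "Kiter v om k p = cis (X k)" for k
  proof (induction k)
    case 0 show ?case using px X0 by simp
  next
    case (Suc k)
    have omk: "om k = symj (Jc (X k))" by (simp add: om_def)
    have "Kiter v om (Suc k) p = Ksym v (om k) (cis (X k))" using Suc by simp
    hence "Kiter v om (Suc k) p = Ksym v (symj (Jc (X k))) (cis (X k))" by (simp only: omk)
    also have "\<dots> = cis (X (Suc k))" using Ksym_cis JcI[of "X k"] XS by auto
    finally show ?case .
  qed
  have deep: "ctr (Jc (X k)) - al1 \<le> Y k \<and> Y k \<le> ctr (Jc (X k)) + al1 \<and>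
              ctr (Jc (X k)) - al1 \<le> X k \<and> X k \<le> ctr (Jc (X k)) + al1"
    if "\<bar>X k - Y k\<bar> < w/2" for k
  proof -
    have "X k - ctr (Jc (X k)) \<le> pi/3" "-(X k - ctr (Jc (X k))) \<le> pi/3"
      using abs_le_D1[OF Jc] abs_le_D2[OF Jc] by auto
    moreover have "X k - Y k < w/2 \<and> -(X k - Y k) < w/2" using that by (simp only: abs_less_iff)
    hence "X k - Y k \<le> w/2" "-(X k - Y k) \<le> w/2" by auto
    ultimately show ?thesis using al1_eq w_pos by argo
  qed
  have KY: "(\<forall>i<k. \<bar>X i - Y i\<bar> < w/2) \<longrightarrow> Kiter v om k q = cis (Y k) \<and> lam^k * d \<le> \<bar>X k - Y k\<bar>" for k
  proof (induction k)
    case 0 show ?case using X0 d unfolding q_def by simp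
  next
    case (Suc k)
    show ?case
    proof
      assume h: "\<forall>i<Suc k. \<bar>X i - Y i\<bar> < w/2"
      hence IH: "Kiter v om k q = cis (Y k)" "lam^k * d \<le> \<bar>X k - Y k\<bar>" using Suc by auto
      have dk: "\<bar>X k - Y k\<bar> < w/2" using h by auto
      note dp = deep[OF dk]
      have Yin: "ctr (Jc (X k)) - al \<le> Y k" "Y k \<le> ctr (Jc (X k)) + al" using dp al1_bounds' by auto
      have omk: "om k = symj (Jc (X k))" by (simp add: om_def)
      have "Kiter v om (Suc k) q = Ksym v (om k) (cis (Y k))" using IH by simp
      hence "Kiter v om (Suc k) q = Ksym v (symj (Jc (X k))) (cis (Y k))" by (simp only: omk)
      also have "\<dots> = cis (Y (Suc k))" using Ksym_cis[OF Yin] XS by simp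
      finally have A: "Kiter v om (Suc k) q = cis (Y (Suc k))" .
      have "lam * \<bar>X k - Y k\<bar> \<le> \<bar>X (Suc k) - Y (Suc k)\<bar>" unfolding XS using dp by (intro gl_expand_abs) auto
      moreover have "lam * (lam^k * d) \<le> lam * \<bar>X k - Y k\<bar>" using IH(2) lam_gt1 by (intro mult_left_mono) auto
      ultimately have "lam^(Suc k) * d \<le> \<bar>X (Suc k) - Y (Suc k)\<bar>" by (simp add: mult.assoc)
      thus "Kiter v om (Suc k) q = cis (Y (Suc k)) \<and> lam^(Suc k) * d \<le> \<bar>X (Suc k) - Y (Suc k)\<bar>" using A by simp
    qed
  qed
  have ex: "\<exists>k. w/2 \<le> \<bar>X k - Y k\<bar>"
  proof (rule ccontr)
    assume "\<not> ?thesis"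
    hence all: "\<bar>X k - Y k\<bar> < w/2" for k by (simp add: not_le)
    obtain n where n: "(w/2)/d < lam^n" using real_arch_pow[OF lam_gt1] by blast
    have "lam^n * d \<le> \<bar>X n - Y n\<bar>" using KY[of n] all by auto
    moreover have "w/2 < lam^n * d" using n d by (simp add: field_simps)
    ultimately show False using all[of n] by linarith
  qed
  define K where "K = (LEAST k. w/2 \<le> \<bar>X k - Y k\<bar>)"
  have K1: "w/2 \<le> \<bar>X K - Y K\<bar>" unfolding K_def using LeastI_ex[OF ex] .
  have K2: "\<bar>X i - Y i\<bar> < w/2" if "i < K" for i using not_less_Least[OF that[unfolded K_def]] unfolding K_def by simp
  have "K \<noteq> 0"
  proof
    assume "K = 0"
    hence "w/2 \<le> \<bar>X 0 - Y 0\<bar>" using K1 by simp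
    thus False using X0 d by simp
  qed
  then obtain m where m: "K = Suc m" by (cases K) auto
  have "\<bar>X m - Y m\<bar> < w/2" using K2 m by auto
  note dp = deep[OF this]
  have K3: "\<bar>X K - Y K\<bar> \<le> 2*pi - 2*al" unfolding m XS using dp al1_bounds'
    by (intro gl_diff_le) auto
  have KYK: "Kiter v om K q = cis (Y K)" using KY[of K] K2 by auto
  have "dist (Kiter v om K p) (Kiter v om K q) = 2 * \<bar>sin ((X K - Y K)/2)\<bar>"
    unfolding KX KYK dist_norm by (rule chord)
  also have "\<bar>sin ((X K - Y K)/2)\<bar> = \<bar>sin (\<bar>X K - Y K\<bar>/2)\<bar>"
    by (rule abs_sin_half)
  finally have "dist (Kiter v om K p) (Kiter v om K q) = 2 * \<bar>sin (\<bar>X K - Y K\<bar>/2)\<bar>" .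
  moreover have "sin (w/4) \<le> \<bar>sin (\<bar>X K - Y K\<bar>/2)\<bar>" using K1 K3 by (rule sin_lower)
  ultimately have "2 * sin (w/4) \<le> dist (Kiter v om K p) (Kiter v om K q)" by linarith
  thus "\<exists>q\<in>U - {p}. \<exists>n om om'. valid_seq om \<and> valid_seq om' \<and> 2 * sin (w/4) \<le> dist (Kiter v om n p) (Kiter v om' n q)"
    using qU qp vom by blast
qed

end

context kas begin

definition monoish :: "(real \<Rightarrow> real) \<Rightarrow> real set \<Rightarrow> bool" where
  "monoish F S \<longleftrightarrow> (\<forall>x\<in>S. \<forall>y\<in>S. x \<le> y \<longrightarrow> F x \<le> F y) \<or> (\<forall>x\<in>S. \<forall>y\<in>S. x \<le> y \<longrightarrow> F y \<le> F x)"

lemma monoish_subset: "monoish F S \<Longrightarrow> T \<subseteq> S \<Longrightarrow> monoish F T"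
  unfolding monoish_def by blast

lemma monoish_shift: "monoish F S \<Longrightarrow> monoish (\<lambda>x. F x + c) S"
  unfolding monoish_def by auto

lemma monoish_id: "monoish (\<lambda>x. x) S" unfolding monoish_def by auto

lemma monoish_comp: assumes "monoish F S" "monoish H T" "F ` S \<subseteq> T" shows "monoish (\<lambda>x. H (F x)) S"
proof -
  have FT: "F x \<in> T" if "x \<in> S" for x using assms(3) that by auto
  have c1: "(\<forall>x\<in>S. \<forall>y\<in>S. x \<le> y \<longrightarrow> F x \<le> F y) \<or> (\<forall>x\<in>S. \<forall>y\<in>S. x \<le> y \<longrightarrow> F y \<le> F x)" using assms(1) unfolding monoish_def .
  have c2: "(\<forall>x\<in>T. \<forall>y\<in>T. x \<le> y \<longrightarrow> H x \<le> H y) \<or> (\<forall>x\<in>T. \<forall>y\<in>T. x \<le> y \<longrightarrow> H y \<le> H x)" using assms(2) unfolding monoish_def .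
  { assume f: "\<forall>x\<in>S. \<forall>y\<in>S. x \<le> y \<longrightarrow> F x \<le> F y" and h: "\<forall>x\<in>T. \<forall>y\<in>T. x \<le> y \<longrightarrow> H x \<le> H y"
    have "\<forall>x\<in>S. \<forall>y\<in>S. x \<le> y \<longrightarrow> H (F x) \<le> H (F y)"
    proof (intro ballI impI)
      fix x y assume xy: "x \<in> S" "y \<in> S" "x \<le> y"
      show "H (F x) \<le> H (F y)" using h FT[OF xy(1)] FT[OF xy(2)] f xy by blast
    qed
    hence ?thesis unfolding monoish_def by blast }
  moreover
  { assume f: "\<forall>x\<in>S. \<forall>y\<in>S. x \<le> y \<longrightarrow> F x \<le> F y" and h: "\<forall>x\<in>T. \<forall>y\<in>T. x \<le> y \<longrightarrow> H y \<le> H x"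
    have "\<forall>x\<in>S. \<forall>y\<in>S. x \<le> y \<longrightarrow> H (F y) \<le> H (F x)"
    proof (intro ballI impI)
      fix x y assume xy: "x \<in> S" "y \<in> S" "x \<le> y"
      show "H (F y) \<le> H (F x)" using h FT[OF xy(1)] FT[OF xy(2)] f xy by blast
    qed
    hence ?thesis unfolding monoish_def by blast }
  moreover
  { assume f: "\<forall>x\<in>S. \<forall>y\<in>S. x \<le> y \<longrightarrow> F y \<le> F x" and h: "\<forall>x\<in>T. \<forall>y\<in>T. x \<le> y \<longrightarrow> H x \<le> H y"
    have "\<forall>x\<in>S. \<forall>y\<in>S. x \<le> y \<longrightarrow> H (F y) \<le> H (F x)"
    proof (intro ballI impI)
      fix x y assume xy: "x \<in> S" "y \<in> S" "x \<le> y"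
      show "H (F y) \<le> H (F x)" using h FT[OF xy(1)] FT[OF xy(2)] f xy by blast
    qed
    hence ?thesis unfolding monoish_def by blast }
  moreover
  { assume f: "\<forall>x\<in>S. \<forall>y\<in>S. x \<le> y \<longrightarrow> F y \<le> F x" and h: "\<forall>x\<in>T. \<forall>y\<in>T. x \<le> y \<longrightarrow> H y \<le> H x"
    have "\<forall>x\<in>S. \<forall>y\<in>S. x \<le> y \<longrightarrow> H (F x) \<le> H (F y)"
    proof (intro ballI impI)
      fix x y assume xy: "x \<in> S" "y \<in> S" "x \<le> y"
      show "H (F x) \<le> H (F y)" using h FT[OF xy(1)] FT[OF xy(2)] f xy by blast
    qed
    hence ?thesis unfolding monoish_def by blast }
  ultimately show ?thesis using c1 c2 by blast
qed

lemma gl_anti: assumes "ctr j - al \<le> x" "x \<le> y" "y \<le> ctr j + al" shows "gl j y \<le> gl j x"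
proof -
  have "y - x \<le> gl j x - gl j y" using assms by (rule gl_noncontr)
  thus ?thesis using assms(2) by linarith
qed

lemma monoish_glI: "monoish (gl j) {ctr j - al .. ctr j + al}"
proof -
  have "\<forall>x\<in>{ctr j - al .. ctr j + al}. \<forall>y\<in>{ctr j - al .. ctr j + al}. x \<le> y \<longrightarrow> gl j y \<le> gl j x"
  proof (intro ballI impI)
    fix x y assume "x \<in> {ctr j - al .. ctr j + al}" "y \<in> {ctr j - al .. ctr j + al}" "x \<le> y"
    thus "gl j y \<le> gl j x" by (intro gl_anti) auto
  qed
  thus ?thesis unfolding monoish_def by (rule disjI2)
qed

lemma monoish_gl: assumes "monoish F S" "F ` S \<subseteq> {ctr j - al .. ctr j + al}"
  shows "monoish (\<lambda>x. gl j (F x)) S"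
  by (rule monoish_comp[OF assms(1) monoish_glI assms(2)])

lemma SUB:
  fixes F :: "real \<Rightarrow> real"
  assumes cont: "continuous_on {a..b} F" and mo: "monoish F {a..b}"
    and cd: "c \<le> d" "{c..d} \<subseteq> F ` {a..b}"
  shows "\<exists>lo hi. a \<le> lo \<and> lo \<le> hi \<and> hi \<le> b \<and> F ` {lo..hi} = {c..d}"
proof -
  have "c \<in> F ` {a..b}" "d \<in> F ` {a..b}" using cd by auto
  then obtain x1 x2 where x1: "x1 \<in> {a..b}" "F x1 = c" and x2: "x2 \<in> {a..b}" "F x2 = d" by blast
  define lo hi where "lo = min x1 x2" and "hi = max x1 x2"
  have lh: "a \<le> lo" "lo \<le> hi" "hi \<le> b" using x1 x2 unfolding lo_def hi_def by auto
  have sub: "{lo..hi} \<subseteq> {a..b}" using lh by auto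
  have "F ` {lo..hi} \<subseteq> {c..d}"
  proof
    fix y assume "y \<in> F ` {lo..hi}"
    then obtain x where x: "x \<in> {lo..hi}" "y = F x" by auto
    have xab: "x \<in> {a..b}" using x sub by auto
    have "x1 \<in> {lo..hi}" "x2 \<in> {lo..hi}" unfolding lo_def hi_def by auto
    from mo show "y \<in> {c..d}" unfolding monoish_def
    proof (elim disjE)
      assume m: "\<forall>x\<in>{a..b}. \<forall>y\<in>{a..b}. x \<le> y \<longrightarrow> F x \<le> F y"
      show ?thesis
      proof (cases "x1 \<le> x2")
        case True
        hence "lo = x1" "hi = x2" unfolding lo_def hi_def by auto
        hence "F x1 \<le> F x" "F x \<le> F x2" using m x x1(1) x2(1) xab by auto
        thus ?thesis using x x1 x2 by auto
      next
        case False
        hence "lo = x2" "hi = x1" unfolding lo_def hi_def by auto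
        hence "F x2 \<le> F x" "F x \<le> F x1" using m x x1 x2 xab by auto
        thus ?thesis using x x1 x2 cd(1) by auto
      qed
    next
      assume m: "\<forall>x\<in>{a..b}. \<forall>y\<in>{a..b}. x \<le> y \<longrightarrow> F y \<le> F x"
      show ?thesis
      proof (cases "x1 \<le> x2")
        case True
        hence "lo = x1" "hi = x2" unfolding lo_def hi_def by auto
        hence "F x2 \<le> F x" "F x \<le> F x1" using m x x1 x2 xab by auto
        thus ?thesis using x x1 x2 cd(1) by auto
      next
        case False
        hence "lo = x2" "hi = x1" unfolding lo_def hi_def by auto
        hence "F x1 \<le> F x" "F x \<le> F x2" using m x x1(1) x2(1) xab by auto
        thus ?thesis using x x1 x2 by auto
      qed
    qed
  qed
  moreover have "{c..d} \<subseteq> F ` {lo..hi}"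
  proof
    fix y assume y: "y \<in> {c..d}"
    have cl: "continuous_on {lo..hi} F" using continuous_on_subset[OF cont sub] .
    have "\<exists>x. lo \<le> x \<and> x \<le> hi \<and> F x = y"
    proof (cases "x1 \<le> x2")
      case True
      hence "lo = x1" "hi = x2" unfolding lo_def hi_def by auto
      thus ?thesis using IVT'[of F lo y hi] cl y x1 x2 lh by auto
    next
      case False
      hence "lo = x2" "hi = x1" unfolding lo_def hi_def by auto
      thus ?thesis using IVT2'[of F hi y lo] cl y x1 x2 lh by auto
    qed
    thus "y \<in> F ` {lo..hi}" by auto
  qed
  ultimately show ?thesis using lh by blast
qed

lemma FIX:
  fixes G :: "real \<Rightarrow> real"
  assumes cont: "continuous_on {lo..hi} G" and lh: "lo \<le> hi" and cov: "{lo..hi} \<subseteq> G ` {lo..hi}"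
  shows "\<exists>x\<in>{lo..hi}. G x = x"
proof -
  have "lo \<in> G ` {lo..hi}" "hi \<in> G ` {lo..hi}" using subsetD[OF cov, of lo] subsetD[OF cov, of hi] lh by auto
  then obtain z1 z2 where z1: "z1 \<in> {lo..hi}" "G z1 = lo" and z2: "z2 \<in> {lo..hi}" "G z2 = hi" by blast
  define h where "h x = G x - x" for x
  have hc: "continuous_on {lo..hi} h" unfolding h_def by (intro continuous_intros cont)
  have h1: "h z1 \<le> 0" "0 \<le> h z2" using z1 z2 unfolding h_def by auto
  show ?thesis
  proof (cases "z1 \<le> z2")
    case True
    have "continuous_on {z1..z2} h" using continuous_on_subset[OF hc] z1 z2 by auto
    then obtain x where "z1 \<le> x" "x \<le> z2" "h x = 0" using IVT'[of h z1 0 z2] h1 True by auto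
    thus ?thesis using z1 z2 unfolding h_def by auto
  next
    case False
    have "continuous_on {z2..z1} h" using continuous_on_subset[OF hc] z1 z2 by auto
    then obtain x where "z2 \<le> x" "x \<le> z1" "h x = 0" using IVT2'[of h z1 0 z2] h1 False by auto
    thus ?thesis using z1 z2 unfolding h_def by auto
  qed
qed

end

context kas begin

definition PIr :: "int \<Rightarrow> real \<Rightarrow> real \<Rightarrow> bool" where
  "PIr k psi r \<longleftrightarrow> r > 0 \<and> (\<exists>a b n om F. ctr (k+1) - al \<le> a \<and> a \<le> b \<and> b \<le> ctr k + al \<and> valid_seq om \<and>
     continuous_on {a..b} F \<and> monoish F {a..b} \<and> (\<forall>x\<in>{a..b}. Kiter v om n (cis x) = cis (F x)) \<and>
     {psi - r .. psi + r} \<subseteq> F ` {a..b})"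

lemma PIr_shift: assumes "PIr k psi r" shows "PIr k (psi + 2*pi* of_int m) r"
proof -
  obtain a b n om F where h: "ctr (k+1) - al \<le> a" "a \<le> b" "b \<le> ctr k + al" "valid_seq om"
     "continuous_on {a..b} F" "monoish F {a..b}" "\<forall>x\<in>{a..b}. Kiter v om n (cis x) = cis (F x)"
     "{psi - r .. psi + r} \<subseteq> F ` {a..b}" and r: "r > 0" using assms unfolding PIr_def by blast
  define c where "c = 2*pi* of_int m"
  define F' where "F' x = F x + c" for x
  have "continuous_on {a..b} F'" unfolding F'_def by (intro continuous_intros h(5))
  moreover have "monoish F' {a..b}" unfolding F'_def by (rule monoish_shift[OF h(6)])
  moreover have "\<forall>x\<in>{a..b}. Kiter v om n (cis x) = cis (F' x)" using h(7) unfolding F'_def c_def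
    by (simp add: cis_shift_int)
  moreover have "{(psi + c) - r .. (psi + c) + r} \<subseteq> F' ` {a..b}"
  proof
    fix y assume "y \<in> {(psi + c) - r .. (psi + c) + r}"
    hence "y - c \<in> {psi - r .. psi + r}" by auto
    then obtain x where "x \<in> {a..b}" "F x = y - c" using h(8) by (metis imageE subsetD)
    thus "y \<in> F' ` {a..b}" unfolding F'_def by force
  qed
  ultimately show ?thesis unfolding PIr_def c_def[symmetric] using h(1-4) r by blast
qed

lemma PI_all: "\<exists>r. PIr k psi r"
proof (rule CORE[where P = "\<lambda>psi. \<exists>r. PIr k psi r"])
  fix x
  show "(\<exists>r. PIr k (x + 2*pi) r) = (\<exists>r. PIr k x r)"
  proof
    assume "\<exists>r. PIr k (x + 2*pi) r"
    then obtain r where "PIr k (x + 2*pi) r" by blast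
    from PIr_shift[OF this, of "-1"] show "\<exists>r. PIr k x r" by auto
  next
    assume "\<exists>r. PIr k x r"
    then obtain r where "PIr k x r" by blast
    from PIr_shift[OF this, of "1"] show "\<exists>r. PIr k (x + 2*pi) r" by auto
  qed
next
  fix j x assume x1: "ctr j - al \<le> x" and x2: "x \<le> ctr j + al" and "\<exists>r. PIr k x r"
  then obtain r where pr: "PIr k x r" by blast
  show "\<exists>r. PIr k (gl j x) r"
  proof (cases "x = ctr j + al")
    case True thus ?thesis using pr gl_right by auto
  next
    case F1: False
    show ?thesis
    proof (cases "x = ctr j - al")
      case True
      hence "gl j x = x + 2*pi* of_int 1" using gl_left by simp
      thus ?thesis using PIr_shift[OF pr, of 1] by auto
    next
      case False
      hence xi: "ctr j - al < x" "x < ctr j + al" using x1 x2 F1 by auto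
      obtain a b n om F where h: "ctr (k+1) - al \<le> a" "a \<le> b" "b \<le> ctr k + al" "valid_seq om"
         "continuous_on {a..b} F" "monoish F {a..b}" "\<forall>x\<in>{a..b}. Kiter v om n (cis x) = cis (F x)"
         "{x - r .. x + r} \<subseteq> F ` {a..b}" and r: "r > 0" using pr unfolding PIr_def by blast
      define r' where "r' = min r (min (x - (ctr j - al)) (ctr j + al - x))"
      have r': "r' > 0" "r' \<le> r" "ctr j - al \<le> x - r'" "x + r' \<le> ctr j + al"
        unfolding r'_def using r xi by auto
      have "{x - r' .. x + r'} \<subseteq> F ` {a..b}" using h(8) r' by auto
      then obtain lo hi where lh: "a \<le> lo" "lo \<le> hi" "hi \<le> b" "F ` {lo..hi} = {x - r' .. x + r'}"
        using SUB[OF h(5) h(6), of "x - r'" "x + r'"] r' by auto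
      have sub: "{lo..hi} \<subseteq> {a..b}" using lh by auto
      have IJ: "{x - r' .. x + r'} \<subseteq> {ctr j - al .. ctr j + al}" using r' by auto
      define F2 where "F2 y = gl j (F y)" for y
      define om2 where "om2 = om(n := symj j)"
      have c2: "continuous_on {lo..hi} F2" unfolding F2_def
        by (rule continuous_on_compose2[OF gl_cont_on[OF IJ] continuous_on_subset[OF h(5) sub]]) (use lh in auto)
      have m2: "monoish F2 {lo..hi}" unfolding F2_def
        by (rule monoish_gl[OF monoish_subset[OF h(6) sub]]) (use lh IJ in auto)
      have k2: "\<forall>y\<in>{lo..hi}. Kiter v om2 (Suc n) (cis y) = cis (F2 y)"
      proof
        fix y assume y: "y \<in> {lo..hi}"
        have "F y \<in> F ` {lo..hi}" using y by (rule imageI)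
        hence "F y \<in> {x - r' .. x + r'}" using lh(4) by simp
        hence Fy: "F y \<in> {ctr j - al .. ctr j + al}" using IJ by blast
        have "Kiter v om2 (Suc n) (cis y) = Ksym v (symj j) (Kiter v om n (cis y))"
          unfolding om2_def by (rule Kiter_upd_step)
        also have "\<dots> = Ksym v (symj j) (cis (F y))" using h(7) y sub by auto
        also have "\<dots> = cis (F2 y)" unfolding F2_def using Fy by (intro Ksym_cis) auto
        finally show "Kiter v om2 (Suc n) (cis y) = cis (F2 y)" .
      qed
      have im: "F2 ` {lo..hi} = {gl j (x + r') .. gl j (x - r')}"
      proof -
        have "F2 ` {lo..hi} = gl j ` (F ` {lo..hi})" unfolding F2_def by auto
        also have "\<dots> = {gl j (x + r') .. gl j (x - r')}" unfolding lh(4) using r' by (intro gl_image) auto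
        finally show ?thesis .
      qed
      have g1: "r' \<le> gl j x - gl j (x + r')" using r' by (intro gl_noncontr[of j x "x + r'", simplified]) auto
      have g2: "r' \<le> gl j (x - r') - gl j x" using r' by (intro gl_noncontr[of j "x - r'" x, simplified]) auto
      have cov: "{gl j x - r' .. gl j x + r'} \<subseteq> F2 ` {lo..hi}" unfolding im using g1 g2 by auto
      have "PIr k (gl j x) r'" unfolding PIr_def
        using r'(1) h(1,3) lh(1,2,3) valid_upd[OF h(4)] c2 m2 k2 cov unfolding om2_def
        by (intro conjI exI[of _ lo] exI[of _ hi] exI[of _ "Suc n"] exI[of _ "om(n := symj j)"] exI[of _ F2]) auto
      thus ?thesis by blast
    qed
  qed
next
  define a b where "a = ctr (k+1) - al" and "b = ctr k + al"
  have ba: "b - a = 2*w" unfolding a_def b_def w_def ctr_succ by simp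
  show "a + w/2 < b - w/2" using ba w_pos by linarith
  show "\<forall>y\<in>{a + w/2 .. b - w/2}. \<exists>r. PIr k y r"
  proof
    fix y assume y: "y \<in> {a + w/2 .. b - w/2}"
    have f1: "ctr (k+1) - al \<le> a" "b \<le> ctr k + al" unfolding a_def b_def by simp_all
    have f2: "a \<le> b" using ba w_pos by simp
    have f4: "valid_seq (\<lambda>_. symj 0)" using valid_symj[of "\<lambda>_. 0"] by simp
    have f5: "continuous_on {a..b} (\<lambda>x. x)" by (rule continuous_on_id)
    have f6: "monoish (\<lambda>x. x) {a..b}" by (rule monoish_id)
    have f8: "{y - w/2 .. y + w/2} \<subseteq> (\<lambda>x. x) ` {a..b}" using y by auto
    have "PIr k y (w/2)" unfolding PIr_def
      apply (rule conjI)
       apply (simp add: w_pos)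
      apply (rule exI[of _ a], rule exI[of _ b], rule exI[of _ "0::nat"], rule exI[of _ "\<lambda>_. symj 0"], rule exI[of _ "\<lambda>x. x"])
      using f1 f2 f4 f5 f6 f8 by simp
    thus "\<exists>r. PIr k y r" by blast
  qed
qed

end

context kas begin

lemma periodic: "dense_periodic v"
  unfolding dense_periodic_def
proof (intro ballI allI impI)
  fix p U assume pC: "p \<in> kasner_circle" and U: "openin (top_of_set kasner_circle) U \<and> p \<in> U"
  define x0 where "x0 = Arg p"
  have px: "cis x0 = p" unfolding x0_def by (rule circ_cis[OF pC])
  obtain e where e: "e > 0" "\<forall>x. \<bar>x - x0\<bar> \<le> e \<longrightarrow> cis x \<in> U"
    using open_arc[of U x0] U px by auto
  define rk where "rk k = (SOME r. PIr k x0 r)" for k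
  have prk: "PIr k x0 (rk k)" for k unfolding rk_def using PI_all by (rule someI_ex)
  have rkp: "rk k > 0" for k using prk[of k] unfolding PIr_def by blast
  define r where "r = min e (min (w/2) (min (rk 0) (min (rk 1) (rk 2))))"
  have r: "0 < r" "r \<le> e" "r \<le> w/2" "r \<le> rk 0" "r \<le> rk 1" "r \<le> rk 2"
    unfolding r_def using e w_pos rkp[of 0] rkp[of 1] rkp[of 2] by auto
  define s t where "s = x0 - r" and "t = x0 + r"
  have st: "s < t" unfolding s_def t_def using r by auto
  obtain j0 where j0: "\<forall>x. \<bar>x - x0\<bar> \<le> w/2 \<longrightarrow> ctr j0 - al1 \<le> x \<and> x \<le> ctr j0 + al1"
    using deep_ctr by blast
  have sI: "ctr j0 - al \<le> s" and tI: "t \<le> ctr j0 + al"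
  proof -
    have "ctr j0 - al1 \<le> s" using j0 r unfolding s_def by auto
    thus "ctr j0 - al \<le> s" using al1_bounds' by linarith
    have "t \<le> ctr j0 + al1" using j0 r unfolding t_def by auto
    thus "t \<le> ctr j0 + al" using al1_bounds' by linarith
  qed
  define Q where "Q a b = (\<exists>n om F. 1 \<le> n \<and> valid_seq om \<and> continuous_on {s..t} F \<and> monoish F {s..t}
     \<and> F ` {s..t} = {a..b} \<and> (\<forall>x\<in>{s..t}. Kiter v om n (cis x) = cis (F x)))" for a b
  have "\<exists>a b J. Q a b \<and> a \<le> ctr (J+1) - al \<and> ctr J + al \<le> b"
  proof (rule P1)
    fix a b j assume q: "Q a b" "a < b" "ctr j - al \<le> a" "b \<le> ctr j + al"
    then obtain n om F where h: "1 \<le> n" "valid_seq om" "continuous_on {s..t} F" "monoish F {s..t}"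
      "F ` {s..t} = {a..b}" "\<forall>x\<in>{s..t}. Kiter v om n (cis x) = cis (F x)" unfolding Q_def by blast
    have IJ: "{a..b} \<subseteq> {ctr j - al .. ctr j + al}" using q by auto
    define F2 where "F2 x = gl j (F x)" for x
    have c2: "continuous_on {s..t} F2" unfolding F2_def
      by (rule continuous_on_compose2[OF gl_cont_on[OF IJ] h(3)]) (use h(5) in auto)
    have m2: "monoish F2 {s..t}" unfolding F2_def by (rule monoish_gl[OF h(4)]) (use h(5) IJ in auto)
    have i2: "F2 ` {s..t} = {gl j b .. gl j a}"
    proof -
      have "F2 ` {s..t} = gl j ` (F ` {s..t})" unfolding F2_def by auto
      also have "\<dots> = {gl j b .. gl j a}" unfolding h(5) using q by (intro gl_image) auto
      finally show ?thesis .
    qed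
    have k2: "\<forall>x\<in>{s..t}. Kiter v (om(n := symj j)) (Suc n) (cis x) = cis (F2 x)"
    proof
      fix x assume x: "x \<in> {s..t}"
      have "F x \<in> {a..b}" using x h(5) by blast
      hence Fx: "ctr j - al \<le> F x" "F x \<le> ctr j + al" using IJ by auto
      have "Kiter v (om(n := symj j)) (Suc n) (cis x) = Ksym v (symj j) (Kiter v om n (cis x))"
        by (rule Kiter_upd_step)
      also have "\<dots> = Ksym v (symj j) (cis (F x))" using h(6) x by auto
      also have "\<dots> = cis (F2 x)" unfolding F2_def using Fx by (rule Ksym_cis)
      finally show "Kiter v (om(n := symj j)) (Suc n) (cis x) = cis (F2 x)" .
    qed
    have "1 \<le> Suc n" by simp
    thus "Q (gl j b) (gl j a)" unfolding Q_def using valid_upd[OF h(2)] c2 m2 i2 k2 by blast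
  next
    define F where "F x = gl j0 x" for x
    have IJ: "{s..t} \<subseteq> {ctr j0 - al .. ctr j0 + al}" using sI tI by auto
    have c: "continuous_on {s..t} F" unfolding F_def using gl_cont_on[OF IJ] by simp
    have m: "monoish F {s..t}" unfolding F_def using monoish_subset[OF monoish_glI IJ] by simp
    have i: "F ` {s..t} = {gl j0 t .. gl j0 s}" unfolding F_def using sI tI st by (intro gl_image) auto
    have k: "\<forall>x\<in>{s..t}. Kiter v (\<lambda>_. symj j0) 1 (cis x) = cis (F x)"
    proof
      fix x assume "x \<in> {s..t}"
      hence "ctr j0 - al \<le> x" "x \<le> ctr j0 + al" using IJ by auto
      thus "Kiter v (\<lambda>_. symj j0) 1 (cis x) = cis (F x)" unfolding F_def using Ksym_cis by simp
    qed
    have v: "valid_seq (\<lambda>_. symj j0)" using valid_symj[of "\<lambda>_. j0"] by simp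
    show "Q (gl j0 t) (gl j0 s)" unfolding Q_def using c m i k v by (intro exI[of _ "1::nat"]) blast
    have "t - s \<le> gl j0 s - gl j0 t" using sI tI st by (intro gl_noncontr) auto
    thus "gl j0 t < gl j0 s" using st by linarith
  qed
  then obtain a b J where QJ: "Q a b" "a \<le> ctr (J+1) - al" "ctr J + al \<le> b" by blast
  then obtain n1 om1 F where h: "1 \<le> n1" "valid_seq om1" "continuous_on {s..t} F" "monoish F {s..t}"
      "F ` {s..t} = {a..b}" "\<forall>x\<in>{s..t}. Kiter v om1 n1 (cis x) = cis (F x)" unfolding Q_def by blast
  define k m where "k = J mod 3" and "m = J div 3"
  have Jkm: "J = k + 3*m" unfolding k_def m_def by simp
  have k3: "k = 0 \<or> k = 1 \<or> k = 2" unfolding k_def by auto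
  have rkk: "r \<le> rk k" using k3 r by auto
  have ce: "ctr (J+1) = ctr (k+1) + 2*pi* of_int m" "ctr J = ctr k + 2*pi* of_int m"
    using ctr_shift[of "k+1" m] ctr_shift[of k m] Jkm by (simp_all add: algebra_simps)
  define F1 where "F1 x = F x + (- 2*pi* of_int m)" for x
  have c1: "continuous_on {s..t} F1" unfolding F1_def by (intro continuous_intros h(3))
  have m1: "monoish F1 {s..t}" unfolding F1_def by (rule monoish_shift[OF h(4)])
  have k1: "cis (F1 x) = cis (F x)" for x
    unfolding F1_def using cis_shift_int[of "F x" "-m"] by simp
  obtain a2 b2 n2 om2 F2 where h2: "ctr (k+1) - al \<le> a2" "a2 \<le> b2" "b2 \<le> ctr k + al" "valid_seq om2"
     "continuous_on {a2..b2} F2" "monoish F2 {a2..b2}" "\<forall>x\<in>{a2..b2}. Kiter v om2 n2 (cis x) = cis (F2 x)"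
     "{x0 - rk k .. x0 + rk k} \<subseteq> F2 ` {a2..b2}" using prk[of k] unfolding PIr_def by blast
  have sub1: "{a2..b2} \<subseteq> F1 ` {s..t}"
  proof
    fix y assume y: "y \<in> {a2..b2}"
    have "y + 2*pi* of_int m \<in> {a..b}" using y h2(1,3) QJ(2,3) ce by auto
    then obtain x where x: "x \<in> {s..t}" "F x = y + 2*pi* of_int m" using h(5) by (metis imageE)
    hence "F1 x = y" unfolding F1_def by simp
    thus "y \<in> F1 ` {s..t}" using x(1) by blast
  qed
  obtain lo hi where lh: "s \<le> lo" "lo \<le> hi" "hi \<le> t" "F1 ` {lo..hi} = {a2..b2}"
    using SUB[OF c1 m1 h2(2) sub1] by blast
  have sub: "{lo..hi} \<subseteq> {s..t}" using lh by auto
  define Gc where "Gc x = F2 (F1 x)" for x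
  have cG: "continuous_on {lo..hi} Gc" unfolding Gc_def
    by (rule continuous_on_compose2[OF h2(5) continuous_on_subset[OF c1 sub]]) (use lh in auto)
  have covG: "{lo..hi} \<subseteq> Gc ` {lo..hi}"
  proof -
    have "{lo..hi} \<subseteq> {x0 - rk k .. x0 + rk k}" using lh rkk unfolding s_def t_def by auto
    also have "\<dots> \<subseteq> F2 ` {a2..b2}" by (rule h2(8))
    also have "\<dots> = Gc ` {lo..hi}" unfolding Gc_def lh(4)[symmetric] by auto
    finally show ?thesis .
  qed
  obtain th where th: "th \<in> {lo..hi}" "Gc th = th" using FIX[OF cG lh(2) covG] by blast
  have thst: "th \<in> {s..t}" using th sub by auto
  have F1th: "F1 th \<in> {a2..b2}" using th lh(4) by blast
  define omt where "omt = seqcat om1 n1 om2"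
  have "Kiter v omt (n1 + n2) (cis th) = Kiter v om2 n2 (Kiter v om1 n1 (cis th))"
    unfolding omt_def by (rule Kiter_seqcat)
  also have "Kiter v om1 n1 (cis th) = cis (F1 th)" using h(6) thst k1 by simp
  also have "Kiter v om2 n2 (cis (F1 th)) = cis (F2 (F1 th))" using h2(7) F1th by blast
  also have "F2 (F1 th) = th" using th(2) unfolding Gc_def .
  finally have fixq: "Kiter v omt (n1 + n2) (cis th) = cis th" .
  have "\<bar>th - x0\<bar> \<le> e" using thst r unfolding s_def t_def by auto
  hence "cis th \<in> U" using e by blast
  moreover have "valid_seq omt" unfolding omt_def by (rule valid_seqcat[OF h(2) h2(4)])
  moreover have "n1 + n2 \<ge> 1" using h(1) by simp
  ultimately show "\<exists>om q n. valid_seq om \<and> q \<in> U \<and> n \<ge> 1 \<and> Kiter v om n q = q" using fixq by blast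
qed

lemma chaos: "realizes_chaos v"
  unfolding realizes_chaos_def using sensitive transitive periodic by blast

end

theorem theorem1:
  fixes v :: real
  assumes "0 < v" and "v < 1/2"
  shows "realizes_chaos v"
proof -
  interpret kas v using assms by unfold_locales
  show ?thesis by (rule chaos)
qed


end
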